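(* There is an isomorphism of bigraded superrings \[ R^{S_n}\cong \mathbb{Z}[x_1,\dots,x_n]^{S_n}\otimes \textstyle\bigwedge^\bullet(\mathcal{S}_{0,1},\dots,\mathcal{S}_{0,n}). \]
   Context: $R=\mathbb{Z}[x_1,\dots,x_n]\otimes\bigwedge^\bullet(\omega_1,\dots,\omega_n)$ is supercommutative and bigraded ($x_i$ even, degree $(2,0)$; $\omega_i$ odd, degree $(-2i,2)$). $S_n$ acts by $s_i(x_j)=x_{s_i(j)}$, $s_i(\omega_j)=\omega_j+\delta_{ij}(x_i-x_{i+1})\omega_{i+1}$; $R^{S_n}$ is the invariant subring. With Demazure operators $\partial_i(f)=(f-s_i(f))/(x_i-x_{i+1})$, $\partial_{\vartheta_0}$ the composite along a reduced expression of the longest element $\vartheta_0$, set $\mathcal{S}_{0,i}=\partial_{\vartheta_0}(x_1^{n-1}x_2^{n-2}\cdots x_{n-1}\omega_i)\in R^{S_n}$ (odd elements). *)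

theory Defs
  imports Main "HOL-Library.Poly_Mapping"
begin

text \<open>An element of R is a finitely supported Z-linear combination of basis
  monomials (alpha, S): alpha is the exponent vector of x^alpha, and S is a finite
  set of indices standing for omega_S = omega_(s1) ... omega_(sk) with s1 < ... < sk.\<close>

type_synonym mon = "(nat \<Rightarrow>\<^sub>0 nat) \<times> nat set"
type_synonym R = "mon \<Rightarrow>\<^sub>0 int"

text \<open>Sign of omega_S * omega_T = sgnpair S T * omega_(S Un T) for disjoint S, T.\<close>
definition sgnpair :: "nat set \<Rightarrow> nat set \<Rightarrow> int" where
  "sgnpair S T = (-1) ^ card {(s, t). s \<in> S \<and> t \<in> T \<and> t < s}"

definition mulR :: "R \<Rightarrow> R \<Rightarrow> R" where
  "mulR f g = (\<Sum>(a, b) \<in> Poly_Mapping.keys f \<times> Poly_Mapping.keys g.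
      if snd a \<inter> snd b = {}
      then Poly_Mapping.single (fst a + fst b, snd a \<union> snd b)
             (sgnpair (snd a) (snd b) * Poly_Mapping.lookup f a * Poly_Mapping.lookup g b)
      else 0)"

definition oneR :: R where
  "oneR = Poly_Mapping.single (0, {}) 1"

definition xv :: "nat \<Rightarrow> R" where
  "xv i = Poly_Mapping.single (Poly_Mapping.single i 1, {}) 1"

definition omv :: "nat \<Rightarrow> R" where
  "omv i = Poly_Mapping.single (0, {i}) 1"

definition Rn :: "nat \<Rightarrow> R set" where
  "Rn n = {f. \<forall>k \<in> Poly_Mapping.keys f. Poly_Mapping.keys (fst k) \<subseteq> {1..n} \<and> snd k \<subseteq> {1..n}}"

definition swap_exp :: "nat \<Rightarrow> (nat \<Rightarrow>\<^sub>0 nat) \<Rightarrow> (nat \<Rightarrow>\<^sub>0 nat)" where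
  "swap_exp i \<alpha> = Abs_poly_mapping (\<lambda>j. Poly_Mapping.lookup \<alpha> (if j = i then i + 1 else if j = i + 1 then i else j))"

definition om_img :: "nat \<Rightarrow> nat \<Rightarrow> R" where
  "om_img i j = (if j = i then omv j + mulR (xv i - xv (i + 1)) (omv (i + 1)) else omv j)"

definition act :: "nat \<Rightarrow> R \<Rightarrow> R" where
  "act i f = (\<Sum>k \<in> Poly_Mapping.keys f.
      mulR (Poly_Mapping.single (swap_exp i (fst k), {}) (Poly_Mapping.lookup f k))
           (foldr mulR (map (om_img i) (sorted_list_of_set (snd k))) oneR))"

text \<open>R^{S_n}: invariants under all simple transpositions s_1..s_(n-1),
  which generate S_n.\<close>
definition Rinv :: "nat \<Rightarrow> R set" where
  "Rinv n = {f \<in> Rn n. \<forall>i \<in> {1..<n}. act i f = f}"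

definition demazure :: "nat \<Rightarrow> R \<Rightarrow> R" where
  "demazure i f = (THE g. mulR (xv i - xv (i + 1)) g = f - act i f)"

text \<open>Reduced word of the longest element: s_1 (s_2 s_1) (s_3 s_2 s_1) ... (s_(n-1) ... s_1).\<close>
definition w0word :: "nat \<Rightarrow> nat list" where
  "w0word n = concat (map (\<lambda>k. rev [1..<k + 1]) [1..<n])"

definition demazure_w0 :: "nat \<Rightarrow> R \<Rightarrow> R" where
  "demazure_w0 n f = foldr demazure (w0word n) f"

definition rho_exp :: "nat \<Rightarrow> (nat \<Rightarrow>\<^sub>0 nat)" where
  "rho_exp n = (\<Sum>j \<in> {1..<n}. Poly_Mapping.single j (n - j))"

definition S0 :: "nat \<Rightarrow> nat \<Rightarrow> R" where
  "S0 n i = demazure_w0 n (Poly_Mapping.single (rho_exp n, {i}) 1)"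

definition S0set :: "nat \<Rightarrow> nat set \<Rightarrow> R" where
  "S0set n I = foldr mulR (map (S0 n) (sorted_list_of_set I)) oneR"

definition bideg :: "mon \<Rightarrow> int \<times> int" where
  "bideg k = (2 * int (sum (Poly_Mapping.lookup (fst k)) (Poly_Mapping.keys (fst k))) - 2 * int (\<Sum>(snd k)),
              2 * int (card (snd k)))"

definition homR :: "int \<times> int \<Rightarrow> R \<Rightarrow> bool" where
  "homR d f \<longleftrightarrow> (\<forall>k \<in> Poly_Mapping.keys f. bideg k = d)"

definition symP :: "nat \<Rightarrow> R set" where
  "symP n = {p \<in> Rinv n. \<forall>k \<in> Poly_Mapping.keys p. snd k = {}}"

text \<open>An element of the tensor product is represented by its coefficients:
  c I is the coefficient (a symmetric polynomial) of xi_I, for I a subset of {1..n}.\<close>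
definition Tcar :: "nat \<Rightarrow> (nat set \<Rightarrow> R) set" where
  "Tcar n = {c. (\<forall>I. I \<subseteq> {1..n} \<longrightarrow> c I \<in> symP n) \<and> (\<forall>I. \<not> I \<subseteq> {1..n} \<longrightarrow> c I = 0)}"

definition tmul :: "nat \<Rightarrow> (nat set \<Rightarrow> R) \<Rightarrow> (nat set \<Rightarrow> R) \<Rightarrow> (nat set \<Rightarrow> R)" where
  "tmul n c d = (\<lambda>K. \<Sum>(I, J) \<in> {(I, J). I \<subseteq> {1..n} \<and> J \<subseteq> {1..n} \<and> I \<inter> J = {} \<and> I \<union> J = K}.
        mulR (Poly_Mapping.single (0, {}) (sgnpair I J)) (mulR (c I) (d J)))"

definition tone :: "nat set \<Rightarrow> R" where
  "tone = (\<lambda>I. if I = {} then oneR else 0)"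

text \<open>xi_i has the bidegree (-2i,2) of S_(0,i); p xi_I has degree deg p + deg xi_I.\<close>
definition homT :: "int \<times> int \<Rightarrow> (nat set \<Rightarrow> R) \<Rightarrow> bool" where
  "homT d c \<longleftrightarrow> (\<forall>I. \<forall>k \<in> Poly_Mapping.keys (c I). bideg (fst k, I) = d)"

definition Phi :: "nat \<Rightarrow> (nat set \<Rightarrow> R) \<Rightarrow> R" where
  "Phi n c = (\<Sum>I \<in> Pow {1..n}. mulR (c I) (S0set n I))"

end

theory Submission
  imports Defs
begin

definition MM :: "mon \<Rightarrow> mon \<Rightarrow> R" where
  "MM a b = (if snd a \<inter> snd b = {} then frag_cmul (sgnpair (snd a) (snd b)) (frag_of (fst a + fst b, snd a \<union> snd b)) else 0)"

lemma frag_cmul_single: "frag_cmul c (Poly_Mapping.single k d) = Poly_Mapping.single k (c * d)"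
  by (rule poly_mapping_eqI) (simp add: lookup_single when_def)

lemma mulR_fe: "mulR f g = frag_extend (\<lambda>a. frag_extend (MM a) g) f"
proof -
  have "mulR f g = (\<Sum>a\<in>Poly_Mapping.keys f. \<Sum>b\<in>Poly_Mapping.keys g. frag_cmul (Poly_Mapping.lookup f a) (frag_cmul (Poly_Mapping.lookup g b) (MM a b)))"
    unfolding mulR_def sum.cartesian_product[symmetric]
    by (intro sum.cong refl) (auto simp: MM_def frag_cmul_single mult_ac)
  then show ?thesis
    by (simp add: frag_extend_def frag_cmul_sum)
qed

lemma frag_extend_fun_add: "frag_extend (\<lambda>i. f i + g i) c = frag_extend f c + frag_extend g c"
  by (simp add: frag_extend_def frag_cmul_distrib2 sum.distrib)

lemma frag_cmul_diff2: "frag_cmul k (a - b) = frag_cmul k a - frag_cmul k b"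
  by (rule poly_mapping_eqI) (simp add: lookup_minus right_diff_distrib)

lemma frag_extend_fun_diff: "frag_extend (\<lambda>i. f i - g i) c = frag_extend f c - frag_extend g c"
  by (simp add: frag_extend_def frag_cmul_diff2 sum_subtractf)

lemma frag_extend_fun_cmul: "frag_extend (\<lambda>i. frag_cmul k (f i)) c = frag_cmul k (frag_extend f c)"
  by (simp add: frag_extend_def frag_cmul_sum mult.commute)

lemma frag_extend_fun_0: "frag_extend (\<lambda>i. 0) c = 0"
  by (simp add: frag_extend_def)

lemma mulR_add_left: "mulR (f + g) h = mulR f h + mulR g h"
  by (simp add: mulR_fe frag_extend_add)
lemma mulR_add_right: "mulR h (f + g) = mulR h f + mulR h g"
  by (simp add: mulR_fe frag_extend_add frag_extend_fun_add)
lemma mulR_diff_left: "mulR (f - g) h = mulR f h - mulR g h"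
  by (simp add: mulR_fe frag_extend_diff)
lemma mulR_diff_right: "mulR h (f - g) = mulR h f - mulR h g"
  by (simp add: mulR_fe frag_extend_diff frag_extend_fun_diff)
lemma mulR_zero_left[simp]: "mulR 0 h = 0"
  by (simp add: mulR_fe)
lemma mulR_zero_right[simp]: "mulR h 0 = 0"
  by (simp add: mulR_fe frag_extend_fun_0)
lemma mulR_minus_left: "mulR (- f) h = - mulR f h"
  by (simp add: mulR_fe frag_extend_minus)
lemma mulR_minus_right: "mulR h (- f) = - mulR h f"
  by (simp add: mulR_fe frag_extend_minus frag_extend_fun_cmul[of "-1", simplified])
lemma mulR_cmul_left: "mulR (frag_cmul k f) h = frag_cmul k (mulR f h)"
  by (simp add: mulR_fe frag_extend_cmul)
lemma mulR_cmul_right: "mulR h (frag_cmul k f) = frag_cmul k (mulR h f)"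
  by (simp add: mulR_fe frag_extend_cmul frag_extend_fun_cmul)
lemma mulR_sum_left: "finite A \<Longrightarrow> mulR (\<Sum>i\<in>A. f i) h = (\<Sum>i\<in>A. mulR (f i) h)"
  by (induction A rule: finite_induct) (simp_all add: mulR_add_left)
lemma mulR_sum_right: "finite A \<Longrightarrow> mulR h (\<Sum>i\<in>A. f i) = (\<Sum>i\<in>A. mulR h (f i))"
  by (induction A rule: finite_induct) (simp_all add: mulR_add_right)
lemma mulR_frag_of: "mulR (frag_of a) (frag_of b) = MM a b"
  by (simp add: mulR_fe)


lemma finite_invset: "finite (S::nat set) \<Longrightarrow> finite {(s, t). s \<in> S \<and> t \<in> T \<and> t < s}"
proof -
  assume "finite S"
  have "{(s, t). s \<in> S \<and> t \<in> T \<and> t < s} \<subseteq> S \<times> {..<Max S}"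
    using \<open>finite S\<close> by (auto intro: less_le_trans[OF _ Max_ge])
  then show ?thesis using \<open>finite S\<close> finite_subset by blast
qed

lemma sgnpair_Un_left:
  assumes "finite A" "finite B" "A \<inter> B = {}"
  shows "sgnpair (A \<union> B) C = sgnpair A C * sgnpair B C"
proof -
  have e: "{(s, t). s \<in> A \<union> B \<and> t \<in> C \<and> t < s} = {(s, t). s \<in> A \<and> t \<in> C \<and> t < s} \<union> {(s, t). s \<in> B \<and> t \<in> C \<and> t < s}"
    by auto
  have "card {(s, t). s \<in> A \<union> B \<and> t \<in> C \<and> t < s} = card {(s, t). s \<in> A \<and> t \<in> C \<and> t < s} + card {(s, t). s \<in> B \<and> t \<in> C \<and> t < s}"
    unfolding e using assms by (intro card_Un_disjoint finite_invset) auto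
  then show ?thesis by (simp add: sgnpair_def power_add)
qed

lemma sgnpair_Un_right:
  assumes "finite A" "B \<inter> C = {}"
  shows "sgnpair A (B \<union> C) = sgnpair A B * sgnpair A C"
proof -
  have e: "{(s, t). s \<in> A \<and> t \<in> B \<union> C \<and> t < s} = {(s, t). s \<in> A \<and> t \<in> B \<and> t < s} \<union> {(s, t). s \<in> A \<and> t \<in> C \<and> t < s}"
    by auto
  have "card {(s, t). s \<in> A \<and> t \<in> B \<union> C \<and> t < s} = card {(s, t). s \<in> A \<and> t \<in> B \<and> t < s} + card {(s, t). s \<in> A \<and> t \<in> C \<and> t < s}"
    unfolding e using assms by (intro card_Un_disjoint finite_invset) auto
  then show ?thesis by (simp add: sgnpair_def power_add)
qed

lemma sgnpair_empty[simp]: "sgnpair {} T = 1" "sgnpair T {} = 1"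
  by (simp_all add: sgnpair_def)

lemma sgnpair_single: "sgnpair {i} {j} = (if j < i then -1 else 1)"
proof -
  have "{(s, t). s \<in> {i} \<and> t \<in> {j} \<and> t < s} = (if j < i then {(i,j)} else {})" by auto
  then show ?thesis by (simp add: sgnpair_def)
qed

definition FS :: "mon set" where "FS = {k. finite (snd k)}"
definition EV :: "mon set" where "EV = {k. snd k = {}}"
definition OD :: "mon set" where "OD = {k. card (snd k) = 1}"

lemma MM_cmul_left: "mulR (frag_cmul c (frag_of a)) h = frag_cmul c (mulR (frag_of a) h)"
  by (simp add: mulR_cmul_left)

lemma MM_assoc:
  assumes "finite (snd a)" "finite (snd b)" "finite (snd c)"
  shows "mulR (MM a b) (frag_of c) = mulR (frag_of a) (MM b c)"
proof (cases "snd a \<inter> snd b = {} \<and> snd b \<inter> snd c = {} \<and> snd a \<inter> snd c = {}")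
  case True
  then show ?thesis using assms
    by (simp add: MM_def mulR_cmul_left mulR_cmul_right mulR_frag_of Int_Un_distrib Int_Un_distrib2
        sgnpair_Un_left sgnpair_Un_right add.assoc Un_assoc mult_ac)
next
  case False
  then show ?thesis using assms
    by (auto simp: MM_def mulR_cmul_left mulR_cmul_right mulR_frag_of Int_Un_distrib Int_Un_distrib2)
qed

lemma mulR_assoc:
  assumes "Poly_Mapping.keys f \<subseteq> FS" "Poly_Mapping.keys g \<subseteq> FS" "Poly_Mapping.keys h \<subseteq> FS"
  shows "mulR (mulR f g) h = mulR f (mulR g h)"
  using assms(1)
proof (induction f rule: frag_induction)
  case zero then show ?case by simp
next
  case (diff a b) then show ?case by (simp add: mulR_diff_left)
next
  case (one x)
  show ?case using assms(2)
  proof (induction g rule: frag_induction)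
    case zero then show ?case by simp
  next
    case (diff a b) then show ?case by (simp add: mulR_diff_left mulR_diff_right)
  next
    case (one y)
    show ?case using assms(3)
    proof (induction h rule: frag_induction)
      case zero then show ?case by simp
    next
      case (diff a b) then show ?case by (simp add: mulR_diff_right)
    next
      case (one z)
      then show ?case using \<open>x \<in> FS\<close> \<open>y \<in> FS\<close> by (simp add: mulR_frag_of MM_assoc FS_def)
    qed
  qed
qed

lemma oneR_left[simp]: "mulR oneR f = f"
proof -
  have "mulR (frag_of (0, {})) f = f"
  proof (induction f rule: frag_induction[OF subset_UNIV])
    case 1 then show ?case by simp
  next
    case (2 x) then show ?case by (simp add: mulR_frag_of MM_def)
  next
    case (3 a b) then show ?case by (simp add: mulR_diff_right)
  qed
  then show ?thesis by (simp add: oneR_def)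
qed

lemma oneR_right[simp]: "mulR f oneR = f"
proof -
  have "mulR f (frag_of (0, {})) = f"
  proof (induction f rule: frag_induction[OF subset_UNIV])
    case 1 then show ?case by simp
  next
    case (2 x) then show ?case by (simp add: mulR_frag_of MM_def)
  next
    case (3 a b) then show ?case by (simp add: mulR_diff_left)
  qed
  then show ?thesis by (simp add: oneR_def)
qed

lemma even_comm:
  assumes "Poly_Mapping.keys e \<subseteq> EV"
  shows "mulR e f = mulR f e"
  using assms
proof (induction e rule: frag_induction)
  case zero then show ?case by simp
next
  case (diff a b) then show ?case by (simp add: mulR_diff_left mulR_diff_right)
next
  case (one x)
  show ?case
  proof (induction f rule: frag_induction[OF subset_UNIV])
    case 1 then show ?case by simp
  next
    case (2 y) then show ?case using one by (simp add: mulR_frag_of MM_def EV_def add.commute)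
  next
    case (3 a b) then show ?case by (simp add: mulR_diff_left mulR_diff_right)
  qed
qed

lemma odd_anticomm:
  assumes "Poly_Mapping.keys f \<subseteq> OD" "Poly_Mapping.keys g \<subseteq> OD"
  shows "mulR f g = - mulR g f"
  using assms(1)
proof (induction f rule: frag_induction)
  case zero then show ?case by simp
next
  case (diff a b) then show ?case by (simp add: mulR_diff_left mulR_diff_right)
next
  case (one x)
  show ?case using assms(2)
  proof (induction g rule: frag_induction)
    case zero then show ?case by simp
  next
    case (diff a b) then show ?case by (simp add: mulR_diff_left mulR_diff_right)
  next
    case (one y)
    obtain i where i: "snd x = {i}" using \<open>x \<in> OD\<close> by (auto simp: OD_def card_Suc_eq)
    obtain j where j: "snd y = {j}" using \<open>y \<in> OD\<close> by (auto simp: OD_def card_Suc_eq)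
    show ?case
      by (auto simp: mulR_frag_of MM_def i j sgnpair_single add.commute insert_commute)
  qed
qed

lemma odd_square0:
  assumes "Poly_Mapping.keys f \<subseteq> OD"
  shows "Poly_Mapping.keys f \<subseteq> OD \<and> mulR f f = 0"
  using assms
proof (induction f rule: frag_induction)
  case zero then show ?case by simp
next
  case (one x)
  obtain i where i: "snd x = {i}" using \<open>x \<in> OD\<close> by (auto simp: OD_def card_Suc_eq)
  then show ?case using one by (simp add: mulR_frag_of MM_def)
next
  case (diff a b)
  have "mulR (a - b) (a - b) = mulR a a - (mulR a b + mulR b a) + mulR b b"
    by (simp add: mulR_diff_left mulR_diff_right algebra_simps)
  also have "mulR a b + mulR b a = 0" using odd_anticomm[of a b] diff by simp
  finally show ?case using diff keys_diff[of a b] by auto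
qed

lemma odd_square: "Poly_Mapping.keys f \<subseteq> OD \<Longrightarrow> mulR f f = 0"
  using odd_square0 by blast


lemma keys_mulR:
  assumes "k \<in> Poly_Mapping.keys (mulR f g)"
  shows "\<exists>a\<in>Poly_Mapping.keys f. \<exists>b\<in>Poly_Mapping.keys g. snd a \<inter> snd b = {} \<and> k = (fst a + fst b, snd a \<union> snd b)"
proof -
  define F where "F = (\<lambda>(a::mon, b::mon).
      if snd a \<inter> snd b = {}
      then Poly_Mapping.single (fst a + fst b, snd a \<union> snd b)
             (sgnpair (snd a) (snd b) * Poly_Mapping.lookup f a * Poly_Mapping.lookup g b)
      else (0::R))"
  have "mulR f g = sum F (Poly_Mapping.keys f \<times> Poly_Mapping.keys g)"
    unfolding mulR_def F_def ..
  then have "k \<in> Poly_Mapping.keys (sum F (Poly_Mapping.keys f \<times> Poly_Mapping.keys g))"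
    using assms by simp
  then have "k \<in> (\<Union>x\<in>Poly_Mapping.keys f \<times> Poly_Mapping.keys g. Poly_Mapping.keys (F x))"
    by (rule subsetD[OF keys_sum])
  then obtain x where x0: "x \<in> Poly_Mapping.keys f \<times> Poly_Mapping.keys g" "k \<in> Poly_Mapping.keys (F x)"
    by (rule UN_E)
  obtain a b where "x = (a, b)" by (cases x)
  then have x: "a \<in> Poly_Mapping.keys f" "b \<in> Poly_Mapping.keys g" "k \<in> Poly_Mapping.keys (F (a, b))"
    using x0 by auto
  show ?thesis
  proof (cases "snd a \<inter> snd b = {}")
    case True
    then have "k = (fst a + fst b, snd a \<union> snd b)" using x(3) by (simp add: F_def split: if_splits)
    then show ?thesis using True x by blast
  next
    case False
    then show ?thesis using x(3) by (simp add: F_def)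
  qed
qed

type_synonym P = "(nat \<Rightarrow>\<^sub>0 nat) \<Rightarrow>\<^sub>0 int"

definition iota :: "P \<Rightarrow> R" where
  "iota p = frag_extend (\<lambda>\<alpha>. frag_of (\<alpha>, {})) p"

definition XX :: "nat \<Rightarrow> P" where "XX i = frag_of (Poly_Mapping.single i 1)"

lemma iota_add: "iota (p + q) = iota p + iota q" by (simp add: iota_def frag_extend_add)
lemma iota_diff: "iota (p - q) = iota p - iota q" by (simp add: iota_def frag_extend_diff)
lemma iota_minus: "iota (- p) = - iota p" by (simp add: iota_def frag_extend_minus)
lemma iota_0[simp]: "iota 0 = 0" by (simp add: iota_def)
lemma iota_of[simp]: "iota (frag_of \<alpha>) = frag_of (\<alpha>, {})" by (simp add: iota_def)
lemma iota_cmul: "iota (frag_cmul c p) = frag_cmul c (iota p)" by (simp add: iota_def frag_extend_cmul)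
lemma iota_sum: "finite A \<Longrightarrow> iota (\<Sum>i\<in>A. f i) = (\<Sum>i\<in>A. iota (f i))"
  by (induction A rule: finite_induct) (simp_all add: iota_add)
lemma iota_1[simp]: "iota 1 = oneR"
proof -
  have e: "(1::P) = frag_of 0" by simp
  have "iota (frag_of 0) = oneR" unfolding iota_of oneR_def ..
  then show ?thesis using e by metis
qed
lemma xv_iota: "xv i = iota (XX i)" by (simp add: xv_def XX_def)

lemma keys_iota: "Poly_Mapping.keys (iota p) \<subseteq> EV"
proof -
  have "Poly_Mapping.keys (iota p) \<subseteq> (\<Union>x\<in>Poly_Mapping.keys p. Poly_Mapping.keys (frag_of (x, {})))"
    unfolding iota_def by (rule keys_frag_extend)
  then show ?thesis by (auto simp: EV_def)
qed

lemma iota_mult: "iota (p * q) = mulR (iota p) (iota q)"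
proof (induction p rule: frag_induction[OF subset_UNIV])
  case 1 then show ?case by simp
next
  case (3 a b) then show ?case by (simp add: left_diff_distrib iota_diff mulR_diff_left)
next
  case (2 x)
  show ?case
  proof (induction q rule: frag_induction[OF subset_UNIV])
    case 1 then show ?case by simp
  next
    case (3 a b) then show ?case by (simp add: right_diff_distrib iota_diff mulR_diff_right)
  next
    case (2 y) then show ?case by (simp add: mult_single mulR_frag_of MM_def)
  qed
qed

lemma lookup_iota: "Poly_Mapping.lookup (iota p) (\<alpha>, S) = (if S = {} then Poly_Mapping.lookup p \<alpha> else 0)"
proof (induction p rule: frag_induction[OF subset_UNIV])
  case 1 then show ?case by simp
next
  case (2 x) then show ?case by (simp add: lookup_single when_def)
next
  case (3 a b) then show ?case by (simp add: iota_diff lookup_minus)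
qed

lemma iota_inj: "iota p = iota q \<Longrightarrow> p = q"
  by (rule poly_mapping_eqI) (metis lookup_iota)

lemma iota_eq_0_iff[simp]: "iota p = 0 \<longleftrightarrow> p = 0"
  using iota_inj[of p 0] by auto

definition cf :: "nat set \<Rightarrow> R \<Rightarrow> P" where
  "cf S f = Abs_poly_mapping (\<lambda>\<alpha>. Poly_Mapping.lookup f (\<alpha>, S))"

lemma lookup_cf: "Poly_Mapping.lookup (cf S f) \<alpha> = Poly_Mapping.lookup f (\<alpha>, S)"
proof -
  have "{\<alpha>. Poly_Mapping.lookup f (\<alpha>, S) \<noteq> 0} \<subseteq> fst ` Poly_Mapping.keys f"
    by (force simp: in_keys_iff)
  then have "finite {\<alpha>. Poly_Mapping.lookup f (\<alpha>, S) \<noteq> 0}"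
    by (rule finite_subset) simp
  then show ?thesis by (simp add: cf_def)
qed

lemma cf_diff: "cf S (f - g) = cf S f - cf S g"
  by (rule poly_mapping_eqI) (simp add: lookup_cf lookup_minus)
lemma cf_add: "cf S (f + g) = cf S f + cf S g"
  by (rule poly_mapping_eqI) (simp add: lookup_cf lookup_add)
lemma cf_0[simp]: "cf S 0 = 0"
  by (rule poly_mapping_eqI) (simp add: lookup_cf)
lemma cf_minus: "cf S (- f) = - cf S f"
  by (rule poly_mapping_eqI) (simp add: lookup_cf)
lemma cf_cmul: "cf S (frag_cmul c f) = frag_cmul c (cf S f)"
  by (rule poly_mapping_eqI) (simp add: lookup_cf)
lemma cf_sum: "finite A \<Longrightarrow> cf S (\<Sum>i\<in>A. f i) = (\<Sum>i\<in>A. cf S (f i))"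
  by (induction A rule: finite_induct) (simp_all add: cf_add)
lemma cf_of: "cf S (frag_of (\<alpha>, T)) = (if T = S then frag_of \<alpha> else 0)"
  by (rule poly_mapping_eqI) (simp add: lookup_cf lookup_single when_def)

lemma cf_eq_0: "(\<And>S. cf S f = 0) \<Longrightarrow> f = 0"
proof (rule poly_mapping_eqI)
  fix k :: mon
  assume "\<And>S. cf S f = 0"
  then have "Poly_Mapping.lookup (cf (snd k) f) (fst k) = 0" by simp
  then show "Poly_Mapping.lookup f k = Poly_Mapping.lookup 0 k" by (simp add: lookup_cf)
qed

lemma cf_eqI: "(\<And>S. cf S f = cf S g) \<Longrightarrow> f = g"
  using cf_eq_0[of "f - g"] by (simp add: cf_diff)

lemma cf_iota_mult: "cf S (mulR (iota p) g) = p * cf S g"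
proof (induction p rule: frag_induction[OF subset_UNIV])
  case 1 then show ?case by simp
next
  case (3 a b) then show ?case by (simp add: left_diff_distrib iota_diff mulR_diff_left cf_diff)
next
  case (2 x)
  show ?case
  proof (induction g rule: frag_induction[OF subset_UNIV])
    case 1 then show ?case by simp
  next
    case (3 a b) then show ?case by (simp add: right_diff_distrib mulR_diff_right cf_diff)
  next
    case (2 y) then show ?case by (cases y) (simp add: mult_single mulR_frag_of MM_def cf_of)
  qed
qed

lemma iota_mult_cancel:
  assumes "p \<noteq> 0" "mulR (iota p) g = mulR (iota p) h"
  shows "g = h"
proof (rule cf_eqI)
  fix S
  have "p * cf S g = p * cf S h" using assms(2) by (metis cf_iota_mult)
  then show "cf S g = cf S h" using assms(1) by simp
qed

definition fsR :: "R \<Rightarrow> bool" where "fsR f \<longleftrightarrow> Poly_Mapping.keys f \<subseteq> FS"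
definition odR :: "R \<Rightarrow> bool" where "odR f \<longleftrightarrow> Poly_Mapping.keys f \<subseteq> OD"
definition evR :: "R \<Rightarrow> bool" where "evR f \<longleftrightarrow> Poly_Mapping.keys f \<subseteq> EV"

lemma fsR_mulR:
  assumes "fsR f" "fsR g" shows "fsR (mulR f g)"
  unfolding fsR_def
proof
  fix k assume "k \<in> Poly_Mapping.keys (mulR f g)"
  then obtain a b where ab: "a \<in> Poly_Mapping.keys f" "b \<in> Poly_Mapping.keys g" "k = (fst a + fst b, snd a \<union> snd b)"
    using keys_mulR by blast
  have "a \<in> FS" "b \<in> FS" using assms ab unfolding fsR_def by blast+
  then show "k \<in> FS" using ab by (simp add: FS_def)
qed
lemma fsR_oneR[simp]: "fsR oneR" by (simp add: fsR_def oneR_def FS_def)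
lemma fsR_0[simp]: "fsR 0" by (simp add: fsR_def)
lemma OD_FS: "OD \<subseteq> FS"
  unfolding OD_def FS_def by (simp add: subset_iff) (metis card_ge_0_finite zero_less_Suc)
lemma fsR_odR: "odR f \<Longrightarrow> fsR f"
  unfolding fsR_def odR_def using OD_FS by blast
lemma fsR_evR: "evR f \<Longrightarrow> fsR f"
  unfolding fsR_def evR_def FS_def EV_def by auto
lemma fsR_add: "fsR f \<Longrightarrow> fsR g \<Longrightarrow> fsR (f + g)"
  unfolding fsR_def using keys_add[of f g] by blast
lemma fsR_diff: "fsR f \<Longrightarrow> fsR g \<Longrightarrow> fsR (f - g)"
  unfolding fsR_def using keys_diff[of f g] by blast
lemma fsR_minus: "fsR f \<Longrightarrow> fsR (- f)"
  unfolding fsR_def by simp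
lemma fsR_cmul: "fsR f \<Longrightarrow> fsR (frag_cmul c f)"
  unfolding fsR_def using keys_cmul[of c f] by blast
lemma fsR_sum: "(\<And>i. i \<in> A \<Longrightarrow> fsR (f i)) \<Longrightarrow> fsR (\<Sum>i\<in>A. f i)"
  by (induction A rule: infinite_finite_induct) (auto intro: fsR_add)

lemma evR_mulR:
  assumes "evR f" "evR g" shows "evR (mulR f g)"
  unfolding evR_def
proof
  fix k assume "k \<in> Poly_Mapping.keys (mulR f g)"
  then obtain a b where ab: "a \<in> Poly_Mapping.keys f" "b \<in> Poly_Mapping.keys g" "k = (fst a + fst b, snd a \<union> snd b)"
    using keys_mulR by blast
  have "a \<in> EV" "b \<in> EV" using assms ab unfolding evR_def by blast+
  then show "k \<in> EV" using ab by (simp add: EV_def)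
qed
lemma odR_ev_mulR:
  assumes "evR f" "odR g" shows "odR (mulR f g)"
  unfolding odR_def
proof
  fix k assume "k \<in> Poly_Mapping.keys (mulR f g)"
  then obtain a b where ab: "a \<in> Poly_Mapping.keys f" "b \<in> Poly_Mapping.keys g" "k = (fst a + fst b, snd a \<union> snd b)"
    using keys_mulR by blast
  have "a \<in> EV" "b \<in> OD" using assms ab unfolding evR_def odR_def by blast+
  then show "k \<in> OD" using ab by (simp add: EV_def OD_def)
qed
lemma odR_add: "odR f \<Longrightarrow> odR g \<Longrightarrow> odR (f + g)"
  unfolding odR_def using keys_add[of f g] by blast
lemma odR_diff: "odR f \<Longrightarrow> odR g \<Longrightarrow> odR (f - g)"
  unfolding odR_def using keys_diff[of f g] by blast
lemma evR_add: "evR f \<Longrightarrow> evR g \<Longrightarrow> evR (f + g)"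
  unfolding evR_def using keys_add[of f g] by blast
lemma evR_diff: "evR f \<Longrightarrow> evR g \<Longrightarrow> evR (f - g)"
  unfolding evR_def using keys_diff[of f g] by blast
lemma odR_0[simp]: "odR 0" by (simp add: odR_def)
lemma evR_0[simp]: "evR 0" by (simp add: evR_def)
lemma odR_sum: "(\<And>i. i \<in> A \<Longrightarrow> odR (f i)) \<Longrightarrow> odR (\<Sum>i\<in>A. f i)"
  by (induction A rule: infinite_finite_induct) (auto intro: odR_add)
lemma evR_sum: "(\<And>i. i \<in> A \<Longrightarrow> evR (f i)) \<Longrightarrow> evR (\<Sum>i\<in>A. f i)"
  by (induction A rule: infinite_finite_induct) (auto intro: evR_add)
lemma evR_iota: "evR (iota p)" using keys_iota by (simp add: evR_def)
lemma odR_omv: "odR (omv i)" by (simp add: odR_def omv_def OD_def)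

lemma mulR_assoc': "fsR f \<Longrightarrow> fsR g \<Longrightarrow> fsR h \<Longrightarrow> mulR (mulR f g) h = mulR f (mulR g h)"
  using mulR_assoc by (simp add: fsR_def)

definition YY :: "(nat \<Rightarrow> R) \<Rightarrow> nat set \<Rightarrow> R" where
  "YY y S = foldr mulR (map y (sorted_list_of_set S)) oneR"

lemma YY_empty[simp]: "YY y {} = oneR" by (simp add: YY_def)

lemma YY_insert_min:
  assumes "finite S" "\<forall>t\<in>S. s < t"
  shows "YY y (insert s S) = mulR (y s) (YY y S)"
proof -
  have m: "Min (insert s S) = s" using assms by (auto intro: Min_eqI simp: less_imp_le)
  have r: "insert s S - {s} = S" using assms by auto
  have l: "sorted_list_of_set (insert s S) = Min (insert s S) # sorted_list_of_set (insert s S - {Min (insert s S)})"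
    by (rule sorted_list_of_set_nonempty) (use assms in auto)
  show ?thesis unfolding YY_def l m r by simp
qed

lemma fsR_foldr: "(\<And>j. fsR (y j)) \<Longrightarrow> fsR (foldr mulR (map y xs) oneR)"
  by (induction xs) (auto intro: fsR_mulR)

lemma fsR_YY: "(\<And>j. fsR (y j)) \<Longrightarrow> fsR (YY y S)"
  unfolding YY_def by (rule fsR_foldr)

lemma y_YY:
  assumes od: "\<And>j. odR (y j)" and "finite S"
  shows "mulR (y s) (YY y S) = (if s \<in> S then 0 else frag_cmul ((-1) ^ card {t\<in>S. t < s}) (YY y (insert s S)))"
  using assms(2)
proof (induction S arbitrary: s rule: finite_linorder_min_induct)
  case empty
  then show ?case by (simp add: YY_insert_min)
next
  case (insert b A)
  have fs: "\<And>j. fsR (y j)" using od fsR_odR by blast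
  have bA: "b \<notin> A" using insert by auto
  have YbA: "YY y (insert b A) = mulR (y b) (YY y A)" using insert YY_insert_min by blast
  consider "s < b" | "s = b" | "b < s" by linarith
  then show ?case
  proof cases
    case 1
    then have e0: "{t \<in> insert b A. t < s} = {}" using insert by auto
    have "(-1::int) ^ card {t \<in> insert b A. t < s} = 1" by (simp only: e0 card.empty power_0)
    moreover have "s \<notin> insert b A" using 1 insert by auto
    moreover have "YY y (insert s (insert b A)) = mulR (y s) (YY y (insert b A))"
      using 1 insert by (intro YY_insert_min) auto
    ultimately show ?thesis by simp
  next
    case 2
    have "mulR (y s) (YY y (insert b A)) = mulR (mulR (y b) (y b)) (YY y A)"
      unfolding YbA 2 by (simp add: mulR_assoc' fs fsR_YY)
    then show ?thesis using odd_square[of "y b"] od 2 by (simp add: odR_def)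
  next
    case 3
    have "mulR (y s) (YY y (insert b A)) = mulR (mulR (y s) (y b)) (YY y A)"
      unfolding YbA by (simp add: mulR_assoc' fs fsR_YY)
    also have "mulR (y s) (y b) = - mulR (y b) (y s)"
      using odd_anticomm[of "y s" "y b"] od by (simp add: odR_def)
    finally have e: "mulR (y s) (YY y (insert b A)) = - mulR (y b) (mulR (y s) (YY y A))"
      by (simp add: mulR_minus_left mulR_assoc' fs fsR_YY)
    show ?thesis
    proof (cases "s \<in> A")
      case True
      then show ?thesis using e insert.IH by simp
    next
      case False
      have sA: "s \<notin> insert b A" using False 3 by auto
      have c: "card {t. (t = b \<or> t \<in> A) \<and> t < s} = Suc (card {t\<in>A. t < s})"
      proof -
        have "{t. (t = b \<or> t \<in> A) \<and> t < s} = insert b {t\<in>A. t < s}" using 3 by auto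
        then show ?thesis using bA insert.hyps(1) by simp
      qed
      have m: "YY y (insert b (insert s A)) = mulR (y b) (YY y (insert s A))"
        using insert 3 by (intro YY_insert_min) auto
      have "mulR (y s) (YY y (insert b A)) = - mulR (y b) (frag_cmul ((-1) ^ card {t\<in>A. t < s}) (YY y (insert s A)))"
        using e insert.IH False by simp
      also have "\<dots> = frag_cmul ((-1) ^ card {t \<in> insert b A. t < s}) (YY y (insert s (insert b A)))"
        by (simp add: mulR_cmul_right c m insert_commute)
      finally show ?thesis using sA by simp
    qed
  qed
qed

lemma sgnpair_single_left: "sgnpair {b} T = (-1) ^ card {t\<in>T. t < b}"
proof -
  have "{(s, t). s \<in> {b} \<and> t \<in> T \<and> t < s} = (\<lambda>t. (b, t)) ` {t\<in>T. t < b}" by auto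
  moreover have "card ((\<lambda>t. (b, t)) ` {t\<in>T. t < b}) = card {t\<in>T. t < b}"
    by (rule card_image) (auto simp: inj_on_def)
  ultimately show ?thesis by (simp add: sgnpair_def)
qed

lemma YY_mult:
  assumes od: "\<And>j. odR (y j)" and "finite S" "finite T"
  shows "mulR (YY y S) (YY y T) = (if S \<inter> T = {} then frag_cmul (sgnpair S T) (YY y (S \<union> T)) else 0)"
  using assms(2)
proof (induction S rule: finite_linorder_min_induct)
  case empty
  then show ?case by simp
next
  case (insert b A)
  have fs: "\<And>j. fsR (y j)" using od fsR_odR by blast
  have bA: "b \<notin> A" using insert by auto
  have "mulR (YY y (insert b A)) (YY y T) = mulR (y b) (mulR (YY y A) (YY y T))"
    using insert YY_insert_min by (simp add: mulR_assoc' fs fsR_YY)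
  show ?case
  proof (cases "A \<inter> T = {}")
    case False
    then show ?thesis using insert.IH \<open>mulR (YY y (insert b A)) (YY y T) = _\<close> by auto
  next
    case True
    have e: "mulR (YY y (insert b A)) (YY y T) = frag_cmul (sgnpair A T) (mulR (y b) (YY y (A \<union> T)))"
      using insert.IH True \<open>mulR (YY y (insert b A)) (YY y T) = _\<close> by (simp add: mulR_cmul_right)
    show ?thesis
    proof (cases "b \<in> T")
      case True
      then show ?thesis using e y_YY[where y=y and S="A \<union> T" and s=b, OF od] insert.hyps assms(3) by auto
    next
      case False
      have c: "{t. (t \<in> A \<or> t \<in> T) \<and> t < b} = {t. t \<in> T \<and> t < b}" using insert.hyps by auto
      have s: "sgnpair (insert b A) T = sgnpair {b} T * sgnpair A T"
        using sgnpair_Un_left[of "{b}" A T] bA insert.hyps by simp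
      have "mulR (YY y (insert b A)) (YY y T) = frag_cmul (sgnpair (insert b A) T) (YY y (insert b A \<union> T))"
        using e y_YY[where y=y and S="A \<union> T" and s=b, OF od] insert.hyps assms(3) False bA
        by (simp add: c s sgnpair_single_left mult.commute)
      then show ?thesis using True False by auto
    qed
  qed
qed

section \<open>The action\<close>

definition sw :: "nat \<Rightarrow> nat \<Rightarrow> nat" where
  "sw i j = (if j = i then Suc i else if j = Suc i then i else j)"

lemma sw_sw[simp]: "sw i (sw i j) = j" by (simp add: sw_def)

lemma lookup_swap_exp: "Poly_Mapping.lookup (swap_exp i \<alpha>) j = Poly_Mapping.lookup \<alpha> (sw i j)"
proof -
  have "{j. Poly_Mapping.lookup \<alpha> (sw i j) \<noteq> 0} \<subseteq> sw i ` Poly_Mapping.keys \<alpha>"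
  proof
    fix x assume "x \<in> {j. Poly_Mapping.lookup \<alpha> (sw i j) \<noteq> 0}"
    then have "sw i x \<in> Poly_Mapping.keys \<alpha>" by (simp add: in_keys_iff)
    then show "x \<in> sw i ` Poly_Mapping.keys \<alpha>" by (rule image_eqI[rotated]) simp
  qed
  then have "finite {j. Poly_Mapping.lookup \<alpha> (sw i j) \<noteq> 0}"
    by (rule finite_subset) simp
  moreover have "(\<lambda>j. Poly_Mapping.lookup \<alpha> (if j = i then i + 1 else if j = i + 1 then i else j)) = (\<lambda>j. Poly_Mapping.lookup \<alpha> (sw i j))"
    by (rule ext) (simp add: sw_def)
  ultimately show ?thesis by (simp add: swap_exp_def)
qed

lemma swap_exp_add: "swap_exp i (\<alpha> + \<beta>) = swap_exp i \<alpha> + swap_exp i \<beta>"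
  by (rule poly_mapping_eqI) (simp add: lookup_swap_exp lookup_add)
lemma swap_exp_0[simp]: "swap_exp i 0 = 0"
  by (rule poly_mapping_eqI) (simp add: lookup_swap_exp)
lemma swap_exp_swap[simp]: "swap_exp i (swap_exp i \<alpha>) = \<alpha>"
  by (rule poly_mapping_eqI) (simp add: lookup_swap_exp)
lemma swap_exp_single: "swap_exp i (Poly_Mapping.single j k) = Poly_Mapping.single (sw i j) k"
  by (rule poly_mapping_eqI) (auto simp: lookup_swap_exp lookup_single when_def sw_def)

definition swapP :: "nat \<Rightarrow> P \<Rightarrow> P" where
  "swapP i p = frag_extend (\<lambda>\<alpha>. frag_of (swap_exp i \<alpha>)) p"

lemma swapP_add: "swapP i (p + q) = swapP i p + swapP i q" by (simp add: swapP_def frag_extend_add)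
lemma swapP_diff: "swapP i (p - q) = swapP i p - swapP i q" by (simp add: swapP_def frag_extend_diff)
lemma swapP_minus: "swapP i (- p) = - swapP i p" by (simp add: swapP_def frag_extend_minus)
lemma swapP_0[simp]: "swapP i 0 = 0" by (simp add: swapP_def)
lemma swapP_of[simp]: "swapP i (frag_of \<alpha>) = frag_of (swap_exp i \<alpha>)" by (simp add: swapP_def)
lemma swapP_cmul: "swapP i (frag_cmul c p) = frag_cmul c (swapP i p)" by (simp add: swapP_def frag_extend_cmul)
lemma swapP_1[simp]: "swapP i 1 = 1"
proof -
  have e: "(1::P) = frag_of 0" by simp
  have "swapP i (frag_of 0) = frag_of (swap_exp i 0)" by (rule swapP_of)
  then show ?thesis using e swap_exp_0 by metis
qed
lemma swapP_XX: "swapP i (XX j) = XX (sw i j)" by (simp add: XX_def swap_exp_single)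

lemma swapP_mult: "swapP i (p * q) = swapP i p * swapP i q"
proof (induction p rule: frag_induction[OF subset_UNIV])
  case 1 then show ?case by simp
next
  case (3 a b) then show ?case by (simp add: left_diff_distrib swapP_diff)
next
  case (2 x)
  show ?case
  proof (induction q rule: frag_induction[OF subset_UNIV])
    case 1 then show ?case by simp
  next
    case (3 a b) then show ?case by (simp add: right_diff_distrib swapP_diff)
  next
    case (2 y) then show ?case by (simp add: mult_single swap_exp_add)
  qed
qed

lemma swapP_swapP[simp]: "swapP i (swapP i p) = p"
  by (induction p rule: frag_induction[OF subset_UNIV]) (simp_all add: swapP_diff)

lemma swapP_sum: "finite A \<Longrightarrow> swapP i (\<Sum>j\<in>A. f j) = (\<Sum>j\<in>A. swapP i (f j))"
  by (induction A rule: finite_induct) (simp_all add: swapP_add)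

lemma swapP_power: "swapP i (p ^ k) = swapP i p ^ k"
  by (induction k) (simp_all add: swapP_mult)

lemma act_fe: "act i f = frag_extend (\<lambda>k. mulR (frag_of (swap_exp i (fst k), {})) (YY (om_img i) (snd k))) f"
  unfolding act_def frag_extend_def YY_def
proof (intro sum.cong refl)
  fix k
  have "Poly_Mapping.single (swap_exp i (fst k), {}) (Poly_Mapping.lookup f k) = frag_cmul (Poly_Mapping.lookup f k) (frag_of (swap_exp i (fst k), {}))"
    by (simp add: frag_cmul_single)
  note eq = this
  show "mulR (Poly_Mapping.single (swap_exp i (fst k), {}) (Poly_Mapping.lookup f k))
          (foldr mulR (map (om_img i) (sorted_list_of_set (snd k))) oneR) =
         frag_cmul (Poly_Mapping.lookup f k) (mulR (frag_of (swap_exp i (fst k), {})) (foldr mulR (map (om_img i) (sorted_list_of_set (snd k))) oneR))"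
    by (subst eq) (rule mulR_cmul_left)
qed

lemma act_add: "act i (f + g) = act i f + act i g" by (simp add: act_fe frag_extend_add)
lemma act_diff: "act i (f - g) = act i f - act i g" by (simp add: act_fe frag_extend_diff)
lemma act_minus: "act i (- f) = - act i f" by (simp add: act_fe frag_extend_minus)
lemma act_0[simp]: "act i 0 = 0" by (simp add: act_fe)
lemma act_cmul: "act i (frag_cmul c f) = frag_cmul c (act i f)" by (simp add: act_fe frag_extend_cmul)
lemma act_sum: "finite A \<Longrightarrow> act i (\<Sum>j\<in>A. f j) = (\<Sum>j\<in>A. act i (f j))"
  by (induction A rule: finite_induct) (simp_all add: act_add)
lemma act_of: "act i (frag_of (\<alpha>, S)) = mulR (frag_of (swap_exp i \<alpha>, {})) (YY (om_img i) S)"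
  by (simp add: act_fe)

lemma act_iota: "act i (iota p) = iota (swapP i p)"
  by (induction p rule: frag_induction[OF subset_UNIV]) (simp_all add: act_of act_diff iota_diff swapP_diff oneR_def[symmetric])

lemma act_oneR[simp]: "act i oneR = oneR"
  using act_iota[of i 1] by simp

lemma act_omv: "act i (omv j) = om_img i j"
proof -
  have "YY (om_img i) {j} = om_img i j" using YY_insert_min[of "{}" j "om_img i"] by simp
  then show ?thesis by (simp add: omv_def act_of oneR_def[symmetric])
qed

lemma odR_om_img: "odR (om_img i j)"
  unfolding om_img_def xv_iota iota_diff[symmetric]
  by (auto intro!: odR_add odR_omv odR_ev_mulR evR_iota)

lemma fsR_frag_of: "finite (snd k) \<Longrightarrow> fsR (frag_of k)"
  by (simp add: fsR_def FS_def)

lemma act_mult_basis: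
  assumes "finite S" "finite T"
  shows "act i (mulR (frag_of (\<alpha>, S)) (frag_of (\<beta>, T))) = mulR (act i (frag_of (\<alpha>, S))) (act i (frag_of (\<beta>, T)))"
proof -
  define Xa :: R where "Xa = frag_of (swap_exp i \<alpha>, {})"
  define Xb :: R where "Xb = frag_of (swap_exp i \<beta>, {})"
  define YS :: R where "YS = YY (om_img i) S"
  define YT :: R where "YT = YY (om_img i) T"
  have od: "\<And>j. odR (om_img i j)" by (rule odR_om_img)
  have fs: "fsR Xa" "fsR Xb" "fsR YS" "fsR YT"
    unfolding Xa_def Xb_def YS_def YT_def
    by (auto intro: fsR_frag_of fsR_YY fsR_odR od)
  have evb: "Poly_Mapping.keys Xb \<subseteq> EV" by (simp add: Xb_def EV_def)
  have "mulR (mulR Xa YS) (mulR Xb YT) = mulR Xa (mulR (mulR YS Xb) YT)"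
    using fs by (simp add: mulR_assoc' fsR_mulR)
  also have "mulR YS Xb = mulR Xb YS" using even_comm[OF evb] by simp
  also have "mulR Xa (mulR (mulR Xb YS) YT) = mulR (mulR Xa Xb) (mulR YS YT)"
    using fs by (simp add: mulR_assoc' fsR_mulR)
  also have "mulR Xa Xb = frag_of (swap_exp i (\<alpha> + \<beta>), {})"
    by (simp add: Xa_def Xb_def mulR_frag_of MM_def swap_exp_add)
  also have "mulR YS YT = (if S \<inter> T = {} then frag_cmul (sgnpair S T) (YY (om_img i) (S \<union> T)) else 0)"
    unfolding YS_def YT_def using YY_mult[OF od assms] .
  finally have e: "mulR (mulR Xa YS) (mulR Xb YT) = mulR (frag_of (swap_exp i (\<alpha> + \<beta>), {})) (if S \<inter> T = {} then frag_cmul (sgnpair S T) (YY (om_img i) (S \<union> T)) else 0)" .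
  show ?thesis
    using e by (simp add: Xa_def Xb_def YS_def YT_def act_of mulR_frag_of MM_def act_cmul mulR_cmul_right)
qed

lemma act_mult:
  assumes "fsR f" "fsR g"
  shows "act i (mulR f g) = mulR (act i f) (act i g)"
  using assms(1) unfolding fsR_def
proof (induction f rule: frag_induction)
  case zero then show ?case by simp
next
  case (diff a b) then show ?case by (simp add: mulR_diff_left act_diff)
next
  case (one x)
  show ?case using assms(2) unfolding fsR_def
  proof (induction g rule: frag_induction)
    case zero then show ?case by simp
  next
    case (diff a b) then show ?case by (simp add: mulR_diff_right act_diff)
  next
    case (one y)
    then show ?case using \<open>x \<in> FS\<close> act_mult_basis[of "snd x" "snd y" i "fst x" "fst y"]
      by (simp add: FS_def)
  qed
qed

definition W :: "nat \<Rightarrow> (nat \<Rightarrow> P) \<Rightarrow> R" where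
  "W n c = (\<Sum>j\<in>{1..n}. mulR (iota (c j)) (omv j))"

definition svec :: "nat \<Rightarrow> (nat \<Rightarrow> P) \<Rightarrow> nat \<Rightarrow> P" where
  "svec a c j = swapP a (c j) + (if j = Suc a then swapP a (c a) * (XX a - XX (Suc a)) else 0)"

lemma W_cong: "(\<And>j. j \<in> {1..n} \<Longrightarrow> c j = d j) \<Longrightarrow> W n c = W n d"
  unfolding W_def by (rule sum.cong) auto

lemma W_diff: "W n (\<lambda>j. c j - d j) = W n c - W n d"
  unfolding W_def by (simp add: iota_diff mulR_diff_left sum_subtractf)

lemma W_add: "W n (\<lambda>j. c j + d j) = W n c + W n d"
  unfolding W_def by (simp add: iota_add mulR_add_left sum.distrib)

lemma odR_W: "odR (W n c)"
  unfolding W_def by (intro odR_sum odR_ev_mulR evR_iota odR_omv)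

lemma fsR_W: "fsR (W n c)" by (rule fsR_odR[OF odR_W])

lemma fsR_iota: "fsR (iota p)" by (rule fsR_evR[OF evR_iota])
lemma fsR_omv: "fsR (omv j)" by (rule fsR_odR[OF odR_omv])

lemma iota_W: "mulR (iota p) (W n c) = W n (\<lambda>j. p * c j)"
  unfolding W_def
  by (simp add: mulR_sum_right mulR_assoc'[symmetric] fsR_iota fsR_omv iota_mult)

lemma act_W:
  assumes "1 \<le> a" "a < n"
  shows "act a (W n c) = W n (svec a c)"
proof -
  define E where "E = mulR (iota (XX a - XX (Suc a))) (omv (Suc a))"
  have om: "om_img a j = omv j + (if j = a then E else 0)" for j
    by (simp add: om_img_def E_def xv_iota iota_diff)
  have "act a (W n c) = (\<Sum>j\<in>{1..n}. mulR (iota (swapP a (c j))) (om_img a j))"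
    unfolding W_def by (simp add: act_sum act_mult fsR_iota fsR_omv act_iota act_omv)
  also have "\<dots> = (\<Sum>j\<in>{1..n}. mulR (iota (swapP a (c j))) (omv j)) + (\<Sum>j\<in>{1..n}. if j = a then mulR (iota (swapP a (c a))) E else 0)"
  proof -
    have pt: "mulR (iota (swapP a (c j))) (om_img a j) = mulR (iota (swapP a (c j))) (omv j) + (if j = a then mulR (iota (swapP a (c a))) E else 0)" for j
      by (simp add: om mulR_add_right)
    show ?thesis by (simp only: pt sum.distrib)
  qed
  also have "(\<Sum>j\<in>{1..n}. if j = a then mulR (iota (swapP a (c a))) E else 0) = mulR (iota (swapP a (c a))) E"
    using assms by (simp add: sum.delta)
  also have "mulR (iota (swapP a (c a))) E = mulR (iota (swapP a (c a) * (XX a - XX (Suc a)))) (omv (Suc a))"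
    unfolding E_def by (simp add: iota_mult mulR_assoc' fsR_iota fsR_omv)
  also have "\<dots> = (\<Sum>j\<in>{1..n}. if j = Suc a then mulR (iota (swapP a (c a) * (XX a - XX (Suc a)))) (omv j) else 0)"
    using assms by (simp add: sum.delta)
  finally have lhs: "act a (W n c) = (\<Sum>j\<in>{1..n}. mulR (iota (swapP a (c j))) (omv j)) +
     (\<Sum>j\<in>{1..n}. if j = Suc a then mulR (iota (swapP a (c a) * (XX a - XX (Suc a)))) (omv j) else 0)" .
  have pt2: "mulR (iota (svec a c j)) (omv j) = mulR (iota (swapP a (c j))) (omv j) +
     (if j = Suc a then mulR (iota (swapP a (c a) * (XX a - XX (Suc a)))) (omv j) else 0)" for j
    by (simp add: svec_def iota_add mulR_add_left)
  have rhs: "W n (svec a c) = (\<Sum>j\<in>{1..n}. mulR (iota (swapP a (c j))) (omv j)) +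
     (\<Sum>j\<in>{1..n}. if j = Suc a then mulR (iota (swapP a (c a) * (XX a - XX (Suc a)))) (omv j) else 0)"
    unfolding W_def by (simp only: pt2 sum.distrib)
  show ?thesis using lhs rhs by simp
qed

lemma XX_inj: "XX a = XX b \<Longrightarrow> a = b"
  unfolding XX_def by (metis frag_of_eq lookup_single_eq lookup_single_not_eq one_neq_zero)

lemma demazure_eq:
  assumes "mulR (xv a - xv (a + 1)) g = f - act a f"
  shows "demazure a f = g"
  unfolding demazure_def
proof (rule the_equality)
  show "mulR (xv a - xv (a + 1)) g = f - act a f" by (rule assms)
next
  fix g' assume g': "mulR (xv a - xv (a + 1)) g' = f - act a f"
  have ne: "XX a - XX (Suc a) \<noteq> 0" using XX_inj[of a "Suc a"] by auto
  have "mulR (iota (XX a - XX (Suc a))) g' = mulR (iota (XX a - XX (Suc a))) g"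
    using g' assms by (simp add: xv_iota iota_diff)
  then show "g' = g" using iota_mult_cancel[OF ne] by blast
qed

lemma demazure_W:
  assumes "1 \<le> a" "a < n"
    and "\<And>j. j \<in> {1..n} \<Longrightarrow> (XX a - XX (Suc a)) * d j = c j - svec a c j"
  shows "demazure a (W n c) = W n d"
proof (rule demazure_eq)
  have "mulR (xv a - xv (a + 1)) (W n d) = W n (\<lambda>j. (XX a - XX (Suc a)) * d j)"
    by (simp add: xv_iota iota_diff[symmetric] iota_W)
  also have "\<dots> = W n (\<lambda>j. c j - svec a c j)" by (rule W_cong) (rule assms(3))
  also have "\<dots> = W n c - act a (W n c)" using act_W[OF assms(1,2), of c] W_diff[of n c "svec a c"] by simp
  finally show "mulR (xv a - xv (a + 1)) (W n d) = W n c - act a (W n c)" .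
qed

section \<open>Complete homogeneous polynomials\<close>

fun hh :: "nat \<Rightarrow> nat list \<Rightarrow> P" where
  "hh 0 L = 1"
| "hh (Suc k) [] = 0"
| "hh (Suc k) (v # vs) = XX v * hh k (v # vs) + hh (Suc k) vs"

lemma hh_diff: "hh (Suc k) (a # Y) - hh (Suc k) (b # Y) = (XX a - XX b) * hh k (a # b # Y)"
proof (induction k)
  case 0 then show ?case by simp
next
  case (Suc k)
  have "hh (Suc (Suc k)) (a # Y) - hh (Suc (Suc k)) (b # Y)
      = XX a * (hh (Suc k) (a # Y) - hh (Suc k) (b # Y)) + (XX a - XX b) * hh (Suc k) (b # Y)"
    by (simp add: algebra_simps)
  also have "\<dots> = (XX a - XX b) * (XX a * hh k (a # b # Y) + hh (Suc k) (b # Y))"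
    by (simp only: Suc) (simp add: algebra_simps del: hh.simps)
  also have "\<dots> = (XX a - XX b) * hh (Suc k) (a # b # Y)" by simp
  finally show ?case .
qed

lemma XX_inj': "XX a = XX b \<longleftrightarrow> a = b"
  using XX_inj by blast

lemma hh_swap2: "hh k (a # b # Y) = hh k (b # a # Y)"
proof (cases "a = b")
  case True then show ?thesis by simp
next
  case False
  have e1: "(XX a - XX b) * hh k (a # b # Y) = hh (Suc k) (a # Y) - hh (Suc k) (b # Y)"
    by (rule hh_diff[symmetric])
  have e2: "(XX b - XX a) * hh k (b # a # Y) = hh (Suc k) (b # Y) - hh (Suc k) (a # Y)"
    by (rule hh_diff[symmetric])
  have e3: "(XX a - XX b) * hh k (b # a # Y) = hh (Suc k) (a # Y) - hh (Suc k) (b # Y)"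
    using e2 by (metis minus_diff_eq mult_minus_left)
  have "(XX a - XX b) * hh k (a # b # Y) = (XX a - XX b) * hh k (b # a # Y)"
    using e1 e3 by simp
  moreover have "XX a - XX b \<noteq> 0" using False XX_inj by auto
  ultimately show ?thesis by simp
qed

lemma hh_cong_cons: "(\<And>j. hh j L = hh j L') \<Longrightarrow> hh k (v # L) = hh k (v # L')"
  by (induction k) simp_all

lemma hh_swap_mid: "hh k (xs @ a # b # ys) = hh k (xs @ b # a # ys)"
proof (induction xs arbitrary: k)
  case Nil then show ?case by (simp add: hh_swap2)
next
  case (Cons x xs)
  show ?case unfolding append_Cons by (rule hh_cong_cons) (rule Cons)
qed

lemma hh_rot: "hh k (a # L) = hh k (L @ [a])"
proof (induction L arbitrary: k)
  case Nil then show ?case by simp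
next
  case (Cons b L)
  have "hh k (a # b # L) = hh k (b # a # L)" by (rule hh_swap2)
  also have "\<dots> = hh k (b # (L @ [a]))" by (rule hh_cong_cons) (rule Cons)
  finally show ?case by simp
qed

lemma hh_append_comm: "hh k (L @ M) = hh k (M @ L)"
proof (induction L arbitrary: k M)
  case Nil then show ?case by simp
next
  case (Cons a L)
  have "hh k ((a # L) @ M) = hh k ((L @ M) @ [a])" using hh_rot by simp
  also have "\<dots> = hh k (L @ (M @ [a]))" by simp
  also have "\<dots> = hh k ((M @ [a]) @ L)" by (rule Cons)
  finally show ?case by simp
qed

lemma swapP_hh: "swapP i (hh k L) = hh k (map (sw i) L)"
  by (induction k L rule: hh.induct) (simp_all add: swapP_add swapP_mult swapP_XX)

lemma hh_single: "hh k [v] = XX v ^ k"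
  by (induction k) simp_all

lemma hh_mulX: "XX x * hh k (x # Y) - XX y * hh k (y # Y) = (XX x - XX y) * hh k (x # y # Y)"
proof -
  have "XX x * hh k (x # Y) = hh (Suc k) (x # Y) - hh (Suc k) Y" by simp
  moreover have "XX y * hh k (y # Y) = hh (Suc k) (y # Y) - hh (Suc k) Y" by simp
  ultimately show ?thesis using hh_diff[of k x Y y] by simp
qed

lemma map_sw_id: "(\<And>x. x \<in> set L \<Longrightarrow> x \<noteq> i \<and> x \<noteq> Suc i) \<Longrightarrow> map (sw i) L = L"
  by (induction L) (auto simp: sw_def)

definition tt :: "nat \<Rightarrow> nat \<Rightarrow> nat \<Rightarrow> P" where
  "tt i m j = (if i \<le> j \<and> j \<le> m then (-1) ^ (j - i) * hh (j - i) [j..<Suc m] else if j = i then 1 else 0)"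

definition stepP :: "(nat \<Rightarrow> nat \<Rightarrow> P) \<Rightarrow> nat \<Rightarrow> bool" where
  "stepP u m \<longleftrightarrow> (\<forall>j. (XX m - XX (Suc m)) * u (Suc m) j = XX m * u m j - svec m (\<lambda>j. XX m * u m j) j)"

lemma svec_XX: "svec m (\<lambda>j. XX m * v j) j = XX (Suc m) * svec m v j"
  by (simp add: svec_def swapP_mult swapP_XX sw_def algebra_simps)

lemma svec_mult_inv: "swapP m q = q \<Longrightarrow> svec m (\<lambda>j. q * v j) j = q * svec m v j"
  by (simp add: svec_def swapP_mult algebra_simps)

lemma upt_lists:
  assumes "j \<le> m"
  shows "hh k [j..<Suc m] = hh k (m # [j..<m])"
    and "hh k [j..<Suc (Suc m)] = hh k (m # Suc m # [j..<m])"
    and "swapP m (hh k [j..<Suc m]) = hh k (Suc m # [j..<m])"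
proof -
  have e1: "[j..<Suc m] = [j..<m] @ [m]" using assms by simp
  have e2: "[j..<Suc (Suc m)] = [j..<m] @ [m, Suc m]" using assms by simp
  have m: "map (sw m) [j..<m] = [j..<m]" by (rule map_sw_id) auto
  show "hh k [j..<Suc m] = hh k (m # [j..<m])" unfolding e1 using hh_append_comm[of k "[j..<m]" "[m]"] by simp
  show "hh k [j..<Suc (Suc m)] = hh k (m # Suc m # [j..<m])" unfolding e2 using hh_append_comm[of k "[j..<m]" "[m, Suc m]"] by simp
  show "swapP m (hh k [j..<Suc m]) = hh k (Suc m # [j..<m])"
    unfolding e1 swapP_hh using hh_append_comm[of k "[j..<m]" "[Suc m]"] m by (simp add: sw_def)
qed

lemma step_tt: "stepP (tt i) m"
  unfolding stepP_def
proof
  fix j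
  have sv: "svec m (\<lambda>j. XX m * tt i m j) j = XX (Suc m) * svec m (tt i m) j" by (rule svec_XX)
  consider (a) "i \<le> j" "j \<le> m" | (b) "j = Suc m" "i \<le> m" | (c) "j = Suc m" "i = Suc m"
    | (d) "j = Suc m" "Suc m < i" | (e) "Suc m < j" | (f) "j \<le> m" "j < i" by linarith
  then show "(XX m - XX (Suc m)) * tt i (Suc m) j = XX m * tt i m j - svec m (\<lambda>j. XX m * tt i m j) j"
  proof cases
    case a
    define k where "k = j - i"
    define L where "L = [j..<m]"
    have t1: "tt i m j = (-1) ^ k * hh k (m # L)" using a upt_lists(1)[OF a(2)] by (simp add: tt_def k_def L_def)
    have t2: "tt i (Suc m) j = (-1) ^ k * hh k (m # Suc m # L)" using a upt_lists(2)[OF a(2)] by (simp add: tt_def k_def L_def)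
    have t3: "svec m (tt i m) j = (-1) ^ k * hh k (Suc m # L)"
      using a upt_lists(3)[OF a(2)] by (simp add: svec_def tt_def k_def L_def swapP_mult swapP_power swapP_minus)
    have "(XX m - XX (Suc m)) * ((-1) ^ k * hh k (m # Suc m # L)) = (-1) ^ k * ((XX m - XX (Suc m)) * hh k (m # Suc m # L))"
      by (simp only: mult.left_commute)
    also have "\<dots> = (-1) ^ k * (XX m * hh k (m # L) - XX (Suc m) * hh k (Suc m # L))"
      unfolding hh_mulX[symmetric] ..
    also have "\<dots> = XX m * ((-1) ^ k * hh k (m # L)) - XX (Suc m) * ((-1) ^ k * hh k (Suc m # L))"
      by (simp add: algebra_simps)
    finally show ?thesis unfolding sv t1 t2 t3 .
  next
    case b
    have t1: "tt i m j = 0" using b by (simp add: tt_def)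
    have t2: "tt i (Suc m) j = (-1) ^ Suc (m - i) * XX (Suc m) ^ Suc (m - i)"
      using b by (simp add: tt_def hh_single Suc_diff_le)
    have t3: "svec m (tt i m) j = (-1) ^ (m - i) * XX (Suc m) ^ (m - i) * (XX m - XX (Suc m))"
      using b by (simp add: svec_def tt_def hh_single swapP_mult swapP_power swapP_minus swapP_XX sw_def)
    show ?thesis unfolding sv t1 t2 t3 by (simp add: algebra_simps)
  next
    case c
    have t1: "tt i m j = 1" using c by (simp add: tt_def)
    have t2: "tt i (Suc m) j = 1" using c by (simp add: tt_def)
    have t3: "svec m (tt i m) j = 1" using c by (simp add: svec_def tt_def)
    show ?thesis unfolding sv t1 t2 t3 by (simp add: algebra_simps)
  next
    case d
    have t1: "tt i m j = 0" using d by (simp add: tt_def)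
    have t2: "tt i (Suc m) j = 0" using d by (simp add: tt_def)
    have t3: "svec m (tt i m) j = 0" using d by (simp add: svec_def tt_def)
    show ?thesis unfolding sv t1 t2 t3 by simp
  next
    case e
    have t1: "tt i m j = (if j = i then 1 else 0)" using e by (simp add: tt_def)
    have t2: "tt i (Suc m) j = (if j = i then 1 else 0)" using e by (simp add: tt_def)
    have t3: "svec m (tt i m) j = (if j = i then 1 else 0)" using e by (simp add: svec_def tt_def)
    show ?thesis unfolding sv t1 t2 t3 by (simp add: algebra_simps)
  next
    case f
    have t1: "tt i m j = 0" using f by (simp add: tt_def)
    have t2: "tt i (Suc m) j = 0" using f by (simp add: tt_def)
    have t3: "svec m (tt i m) j = 0" using f by (simp add: svec_def tt_def)
    show ?thesis unfolding sv t1 t2 t3 by simp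
  qed
qed

lemma upt_split3:
  assumes "j \<le> a" "Suc a \<le> n"
  shows "[j..<Suc n] = [j..<a] @ a # Suc a # [Suc (Suc a)..<Suc n]"
proof -
  have "[j..<Suc n] = [j..<a] @ [a..<a + (Suc n - a)]"
    using upt_add_eq_append[OF assms(1), of "Suc n - a"] assms by simp
  also have "a + (Suc n - a) = Suc n" using assms by simp
  also have "[a..<Suc n] = a # Suc a # [Suc (Suc a)..<Suc n]"
    using assms by (simp add: upt_conv_Cons)
  finally show ?thesis .
qed

lemma inv_tt:
  assumes "1 \<le> a" "a < n"
  shows "svec a (tt i n) j = tt i n j"
proof (cases "j = Suc a")
  case True
  consider (A1) "i \<le> a" | (A2) "i = Suc a" | (A3) "Suc a < i" by linarith
  then show ?thesis
  proof cases
    case A1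
    define k where "k = a - i"
    define Z where "Z = [Suc (Suc a)..<Suc n]"
    have l1: "[Suc a..<Suc n] = Suc a # Z" using assms by (simp add: Z_def upt_conv_Cons)
    have l2: "[a..<Suc n] = a # Suc a # Z" using assms by (simp add: Z_def upt_conv_Cons)
    have mZ: "map (sw a) Z = Z" by (rule map_sw_id) (auto simp: Z_def)
    have ta1: "tt i n (Suc a) = (-1) ^ Suc k * hh (Suc k) (Suc a # Z)"
      using A1 assms l1 by (simp add: tt_def k_def Suc_diff_le)
    have ta: "tt i n a = (-1) ^ k * hh k (a # Suc a # Z)"
      using A1 assms l2 by (simp add: tt_def k_def)
    have s1: "swapP a (tt i n (Suc a)) = (-1) ^ Suc k * hh (Suc k) (a # Z)"
      unfolding ta1 by (simp add: swapP_mult swapP_power swapP_minus swapP_hh mZ sw_def del: hh.simps)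
    have s2: "swapP a (tt i n a) = (-1) ^ k * hh k (a # Suc a # Z)"
      unfolding ta by (simp add: swapP_mult swapP_power swapP_minus swapP_hh mZ sw_def hh_swap2 del: hh.simps)
    have "svec a (tt i n) j = (-1) ^ Suc k * hh (Suc k) (a # Z) + (-1) ^ k * hh k (a # Suc a # Z) * (XX a - XX (Suc a))"
      using True by (simp add: svec_def s1 s2)
    also have "\<dots> = (-1) ^ Suc k * (hh (Suc k) (a # Z) - (XX a - XX (Suc a)) * hh k (a # Suc a # Z))"
      by (simp add: algebra_simps del: hh.simps)
    also have "hh (Suc k) (a # Z) - (XX a - XX (Suc a)) * hh k (a # Suc a # Z) = hh (Suc k) (Suc a # Z)"
      using hh_diff[of k a Z "Suc a"] by (simp del: hh.simps add: algebra_simps)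
    finally show ?thesis using ta1 True by simp
  next
    case A2
    then show ?thesis using True assms by (simp add: svec_def tt_def)
  next
    case A3
    then show ?thesis using True assms by (simp add: svec_def tt_def)
  qed
next
  case False
  then have sv: "svec a (tt i n) j = swapP a (tt i n j)" by (simp add: svec_def)
  show ?thesis
  proof (cases "i \<le> j \<and> j \<le> n")
    case True
    define k where "k = j - i"
    have tj: "tt i n j = (-1) ^ k * hh k [j..<Suc n]" using True by (simp add: tt_def k_def)
    have "swapP a (hh k [j..<Suc n]) = hh k [j..<Suc n]"
    proof (cases "j \<le> a")
      case True
      have sp: "[j..<Suc n] = [j..<a] @ a # Suc a # [Suc (Suc a)..<Suc n]"
        using True assms by (intro upt_split3) auto
      have m1: "map (sw a) [j..<a] = [j..<a]" by (rule map_sw_id) auto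
      have m2: "map (sw a) [Suc (Suc a)..<Suc n] = [Suc (Suc a)..<Suc n]" by (rule map_sw_id) auto
      show ?thesis unfolding swapP_hh sp using m1 m2 hh_swap_mid by (simp add: sw_def)
    next
      case False
      then have "Suc (Suc a) \<le> j" using \<open>j \<noteq> Suc a\<close> by simp
      then have "map (sw a) [j..<Suc n] = [j..<Suc n]" by (intro map_sw_id) auto
      then show ?thesis by (simp add: swapP_hh)
    qed
    then show ?thesis unfolding sv tj by (simp add: swapP_mult swapP_power swapP_minus)
  next
    case False
    then have "tt i n j = (if j = i then 1 else 0)" by (auto simp: tt_def)
    then show ?thesis unfolding sv by simp
  qed
qed

section \<open>The Demazure chain\<close>

definition EE :: "nat \<Rightarrow> nat \<Rightarrow> (nat \<Rightarrow>\<^sub>0 nat)" where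
  "EE N k = (\<Sum>j\<in>{1..<N}. Poly_Mapping.single j (if j \<le> k then N - 1 - j else N - j))"

lemma lookup_sum_single:
  "Poly_Mapping.lookup (\<Sum>j\<in>{1..<(N::nat)}. Poly_Mapping.single j (f j)) x = (if 1 \<le> x \<and> x < N then f x else (0::nat))"
  by (simp add: lookup_sum lookup_single when_def)

lemma lookup_EE: "Poly_Mapping.lookup (EE N k) x = (if 1 \<le> x \<and> x < N then (if x \<le> k then N - 1 - x else N - x) else 0)"
  unfolding EE_def by (rule lookup_sum_single)

lemma lookup_rho: "Poly_Mapping.lookup (rho_exp N) x = (if 1 \<le> x \<and> x < N then N - x else 0)"
  unfolding rho_exp_def by (rule lookup_sum_single)

lemma EE_0: "EE N 0 = rho_exp N"
  by (rule poly_mapping_eqI) (simp add: lookup_EE lookup_rho)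

lemma EE_last: "1 \<le> N \<Longrightarrow> EE N (N - 1) = rho_exp (N - 1)"
  by (rule poly_mapping_eqI) (auto simp: lookup_EE lookup_rho)

lemma EE_step: "Suc k < N \<Longrightarrow> EE N k = EE N (Suc k) + Poly_Mapping.single (Suc k) 1"
  by (rule poly_mapping_eqI) (auto simp: lookup_EE lookup_add lookup_single when_def)

lemma swap_exp_id: "Poly_Mapping.lookup \<alpha> a = Poly_Mapping.lookup \<alpha> (Suc a) \<Longrightarrow> swap_exp a \<alpha> = \<alpha>"
  by (rule poly_mapping_eqI) (simp add: lookup_swap_exp sw_def)

lemma EE_sym: "Suc k < N \<Longrightarrow> swap_exp (Suc k) (EE N (Suc k)) = EE N (Suc k)"
  by (rule swap_exp_id) (simp add: lookup_EE)

definition blk :: "nat \<Rightarrow> R \<Rightarrow> R" where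
  "blk k f = foldr demazure (rev [1..<Suc k]) f"

lemma blk_0[simp]: "blk 0 f = f" by (simp add: blk_def)
lemma blk_Suc: "blk (Suc k) f = demazure (Suc k) (blk k f)" by (simp add: blk_def)

lemma w0word_Suc: "w0word (Suc m) = w0word m @ rev [1..<Suc m]"
proof (cases m)
  case 0 then show ?thesis by (simp add: w0word_def)
next
  case (Suc m')
  then show ?thesis by (simp add: w0word_def)
qed

lemma demazure_w0_Suc: "demazure_w0 (Suc m) f = demazure_w0 m (blk m f)"
  by (simp add: demazure_w0_def w0word_Suc blk_def)

lemma block:
  assumes "N \<le> n" and st: "\<And>m. 1 \<le> m \<Longrightarrow> m < N \<Longrightarrow> stepP u m" and "k < N"
  shows "blk k (W n (\<lambda>j. frag_of (EE N 0) * u 1 j)) = W n (\<lambda>j. frag_of (EE N k) * u (Suc k) j)"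
  using assms(3)
proof (induction k)
  case 0 then show ?case by simp
next
  case (Suc k)
  define a where "a = Suc k"
  define q where "q = (frag_of (EE N (Suc k)) :: P)"
  have qa: "frag_of (EE N k) = q * XX a"
    using EE_step[OF Suc.prems] by (simp add: q_def XX_def a_def mult_single)
  have qs: "swapP a q = q" using EE_sym[OF Suc.prems] by (simp add: q_def a_def)
  have sta: "stepP u a" using st Suc.prems assms(1) by (simp add: a_def)
  have "blk (Suc k) (W n (\<lambda>j. frag_of (EE N 0) * u 1 j)) = demazure a (W n (\<lambda>j. frag_of (EE N k) * u a j))"
    using Suc by (simp add: blk_Suc a_def)
  also have "\<dots> = W n (\<lambda>j. q * u (Suc a) j)"
  proof (rule demazure_W)
    show "1 \<le> a" by (simp add: a_def)
    show "a < n" using Suc.prems assms(1) by (simp add: a_def)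
    fix j
    have e: "(\<lambda>j. frag_of (EE N k) * u a j) = (\<lambda>j. q * (XX a * u a j))" unfolding qa by (simp add: mult_ac)
    have "frag_of (EE N k) * u a j - svec a (\<lambda>j. frag_of (EE N k) * u a j) j
        = q * (XX a * u a j - svec a (\<lambda>j. XX a * u a j) j)"
      by (simp only: e svec_mult_inv[OF qs]) (simp add: qa algebra_simps)
    also have "\<dots> = q * ((XX a - XX (Suc a)) * u (Suc a) j)"
      using sta by (simp add: stepP_def)
    finally show "(XX a - XX (Suc a)) * (q * u (Suc a) j) = frag_of (EE N k) * u a j - svec a (\<lambda>j. frag_of (EE N k) * u a j) j"
      by (simp add: mult_ac)
  qed
  finally show ?case by (simp add: q_def a_def)
qed

lemma stepP_const:
  assumes "\<And>j. svec m t j = t j"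
  shows "stepP (\<lambda>_. t) m"
  unfolding stepP_def using assms by (simp add: svec_XX algebra_simps)

lemma stageB:
  assumes inv: "\<And>a j. 1 \<le> a \<Longrightarrow> a < n \<Longrightarrow> svec a t j = t j" and "M < n"
  shows "demazure_w0 M (W n (\<lambda>j. frag_of (rho_exp M) * t j)) = W n t"
  using assms(2)
proof (induction M)
  case 0
  have "rho_exp 0 = 0" by (simp add: rho_exp_def)
  then show ?case by (simp add: demazure_w0_def w0word_def)
next
  case (Suc M)
  have "blk M (W n (\<lambda>j. frag_of (EE (Suc M) 0) * t j)) = W n (\<lambda>j. frag_of (EE (Suc M) M) * t j)"
    using block[of "Suc M" n "\<lambda>_. t" M] Suc.prems inv stepP_const by simp
  then have "blk M (W n (\<lambda>j. frag_of (rho_exp (Suc M)) * t j)) = W n (\<lambda>j. frag_of (rho_exp M) * t j)"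
    using EE_0[of "Suc M"] EE_last[of "Suc M"] by simp
  then show ?case using Suc by (simp add: demazure_w0_Suc)
qed

lemma S0_formula:
  assumes "1 \<le> i" "i \<le> n"
  shows "S0 n i = W n (tt i n)"
proof -
  obtain m where n: "n = Suc m" using assms by (cases n) auto
  have init: "Poly_Mapping.single (rho_exp n, {i}) 1 = W n (\<lambda>j. frag_of (EE n 0) * tt i 1 j)"
  proof -
    have t1: "tt i 1 j = (if j = i then 1 else 0)" for j using assms by (auto simp: tt_def)
    have pt: "mulR (iota (frag_of (EE n 0) * tt i 1 j)) (omv j) = (if j = i then mulR (iota (frag_of (rho_exp n))) (omv j) else 0)" for j
      unfolding t1 EE_0 by simp
    have "W n (\<lambda>j. frag_of (EE n 0) * tt i 1 j) = mulR (iota (frag_of (rho_exp n))) (omv i)"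
      unfolding W_def pt using assms by simp
    also have "\<dots> = Poly_Mapping.single (rho_exp n, {i}) 1"
      by (simp add: omv_def mulR_frag_of MM_def)
    finally show ?thesis by simp
  qed
  have "S0 n i = demazure_w0 n (W n (\<lambda>j. frag_of (EE n 0) * tt i 1 j))"
    unfolding S0_def init ..
  also have "\<dots> = demazure_w0 m (blk m (W n (\<lambda>j. frag_of (EE n 0) * tt i 1 j)))"
    unfolding n demazure_w0_Suc ..
  also have "blk m (W n (\<lambda>j. frag_of (EE n 0) * tt i 1 j)) = W n (\<lambda>j. frag_of (EE n m) * tt i (Suc m) j)"
    using block[of n n "tt i" m] step_tt n by simp
  also have "EE n m = rho_exp m" using EE_last[of n] n by simp
  also have "demazure_w0 m (W n (\<lambda>j. frag_of (rho_exp m) * tt i (Suc m) j)) = W n (tt i (Suc m))"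
    using stageB[of n "tt i (Suc m)" m] inv_tt n by simp
  finally show ?thesis using n by simp
qed

section \<open>Leading terms\<close>

lemma sum_single_term:
  assumes "finite X" "x0 \<in> X" "\<And>x. x \<in> X \<Longrightarrow> x \<noteq> x0 \<Longrightarrow> F x = 0"
  shows "sum F X = F x0"
proof -
  have "sum F X = F x0 + sum F (X - {x0})" using assms by (simp add: sum.remove)
  also have "sum F (X - {x0}) = 0" using assms by (intro sum.neutral) auto
  finally show ?thesis by simp
qed

lemma cf_omv: "cf K (omv j) = (if K = {j} then 1 else 0)"
  by (simp add: omv_def cf_of)

lemma cf_W: "cf K (W n c) = (\<Sum>j\<in>{1..n}. if K = {j} then c j else 0)"
  unfolding W_def by (simp add: cf_sum cf_iota_mult cf_omv if_distrib cong: if_cong)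

lemma cf_W_single: "j \<in> {1..n} \<Longrightarrow> cf {j} (W n c) = c j"
  unfolding cf_W by (rule trans[OF sum_single_term[of _ j]]) auto

lemma cf_W_other: "\<not> (\<exists>j\<in>{1..n}. K = {j}) \<Longrightarrow> cf K (W n c) = 0"
  unfolding cf_W by (rule sum.neutral) auto

definition spt :: "nat \<Rightarrow> R \<Rightarrow> bool" where
  "spt n f \<longleftrightarrow> (\<forall>k\<in>Poly_Mapping.keys f. snd k \<subseteq> {1..n})"

lemma cf_single: "cf S (Poly_Mapping.single (\<alpha>, T) c) = (if T = S then Poly_Mapping.single \<alpha> c else 0)"
  by (rule poly_mapping_eqI) (simp add: lookup_cf lookup_single when_def)

lemma of_int_P: "(of_int c :: P) = Poly_Mapping.single 0 c"
proof -
  have "Poly_Mapping.single 0 (of_int c :: int) = (of_int c :: P)" by (rule single_of_int)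
  then show ?thesis by simp
qed

lemma cf_mulR_basis:
  "cf K (mulR (frag_of (\<alpha>, U0)) (frag_of (\<beta>, V0))) =
     (if U0 \<inter> V0 = {} \<and> U0 \<union> V0 = K then of_int (sgnpair U0 V0) * (frag_of \<alpha> * frag_of \<beta>) else 0)"
  by (simp add: mulR_frag_of MM_def cf_cmul cf_single mult_single frag_cmul_single of_int_P)

lemma cf_mulR:
  assumes A: "finite A" "\<forall>k\<in>Poly_Mapping.keys f. snd k \<in> A"
    and B: "finite B" "\<forall>k\<in>Poly_Mapping.keys g. snd k \<in> B"
  shows "cf K (mulR f g) = (\<Sum>S\<in>A. \<Sum>T\<in>B. if S \<inter> T = {} \<and> S \<union> T = K then of_int (sgnpair S T) * (cf S f * cf T g) else 0)"
proof -
  have kf: "Poly_Mapping.keys f \<subseteq> {k. snd k \<in> A}" using A by auto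
  have kg: "Poly_Mapping.keys g \<subseteq> {k. snd k \<in> B}" using B by auto
  show ?thesis using kf
  proof (induction f rule: frag_induction)
    case zero then show ?case by (simp cong: if_cong)
  next
    case (diff a b)
    then show ?case
      by (simp add: mulR_diff_left cf_diff sum_subtractf[symmetric] algebra_simps if_distrib cong: if_cong)
  next
    case (one x)
    obtain \<alpha> U0 where x: "x = (\<alpha>, U0)" by (cases x)
    have U0: "U0 \<in> A" using one x by simp
    show ?case using kg
    proof (induction g rule: frag_induction)
      case zero then show ?case by (simp cong: if_cong)
    next
      case (diff a b)
      then show ?case
        by (simp add: mulR_diff_right cf_diff sum_subtractf[symmetric] algebra_simps if_distrib cong: if_cong)
    next
      case (one y)
      obtain \<beta> V0 where y: "y = (\<beta>, V0)" by (cases y)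
      have V0: "V0 \<in> B" using one y by simp
      have "(\<Sum>S\<in>A. \<Sum>T\<in>B. if S \<inter> T = {} \<and> S \<union> T = K then of_int (sgnpair S T) * (cf S (frag_of x) * cf T (frag_of y)) else 0)
          = (\<Sum>T\<in>B. if U0 \<inter> T = {} \<and> U0 \<union> T = K then of_int (sgnpair U0 T) * (cf U0 (frag_of x) * cf T (frag_of y)) else 0)"
        by (rule sum_single_term) (auto simp: A U0 x cf_of cong: if_cong)
      also have "\<dots> = (if U0 \<inter> V0 = {} \<and> U0 \<union> V0 = K then of_int (sgnpair U0 V0) * (cf U0 (frag_of x) * cf V0 (frag_of y)) else 0)"
        by (rule sum_single_term) (auto simp: B V0 y cf_of cong: if_cong)
      finally show ?case by (simp add: x y cf_mulR_basis cf_of)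
    qed
  qed
qed

lemma spt_mulR:
  assumes "spt n f" "spt n g" shows "spt n (mulR f g)"
  unfolding spt_def
proof
  fix k assume "k \<in> Poly_Mapping.keys (mulR f g)"
  then obtain a b where ab: "a \<in> Poly_Mapping.keys f" "b \<in> Poly_Mapping.keys g" "k = (fst a + fst b, snd a \<union> snd b)"
    using keys_mulR by blast
  then show "snd k \<subseteq> {1..n}" using assms by (auto simp: spt_def)
qed

lemma spt_add: "spt n f \<Longrightarrow> spt n g \<Longrightarrow> spt n (f + g)"
  unfolding spt_def using keys_add[of f g] by blast
lemma spt_diff: "spt n f \<Longrightarrow> spt n g \<Longrightarrow> spt n (f - g)"
  unfolding spt_def using keys_diff[of f g] by blast
lemma spt_0[simp]: "spt n 0" by (simp add: spt_def)
lemma spt_oneR[simp]: "spt n oneR" by (simp add: spt_def oneR_def)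
lemma spt_cmul: "spt n f \<Longrightarrow> spt n (frag_cmul c f)"
  unfolding spt_def using keys_cmul[of c f] by blast
lemma spt_sum: "(\<And>i. i \<in> A \<Longrightarrow> spt n (f i)) \<Longrightarrow> spt n (\<Sum>i\<in>A. f i)"
  by (induction A rule: infinite_finite_induct) (auto intro: spt_add)
lemma spt_evR: "evR f \<Longrightarrow> spt n f"
  unfolding spt_def evR_def EV_def by auto
lemma spt_iota: "spt n (iota p)" by (rule spt_evR[OF evR_iota])
lemma spt_omv: "j \<in> {1..n} \<Longrightarrow> spt n (omv j)" by (simp add: spt_def omv_def)
lemma spt_W: "spt n (W n c)"
  unfolding W_def by (intro spt_sum spt_mulR spt_iota spt_omv) auto

lemma YY_cong: "finite S \<Longrightarrow> (\<And>j. j \<in> S \<Longrightarrow> y j = z j) \<Longrightarrow> YY y S = YY z S"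
  unfolding YY_def by (metis (mono_tags, lifting) map_eq_conv set_sorted_list_of_set)

definition yS :: "nat \<Rightarrow> nat \<Rightarrow> R" where
  "yS n j = (if j \<in> {1..n} then S0 n j else omv j)"

lemma S0_W: "j \<in> {1..n} \<Longrightarrow> S0 n j = W n (tt j n)"
  using S0_formula by auto

lemma odR_yS: "odR (yS n j)"
  by (simp add: yS_def S0_W odR_W odR_omv)

lemma fsR_yS: "fsR (yS n j)" by (rule fsR_odR[OF odR_yS])

lemma spt_yS: "j \<in> {1..n} \<Longrightarrow> spt n (yS n j)"
  by (simp add: yS_def S0_W spt_W)

lemma S0set_YY: "I \<subseteq> {1..n} \<Longrightarrow> S0set n I = YY (yS n) I"
  unfolding S0set_def YY_def[symmetric] by (rule YY_cong) (auto intro: finite_subset simp: yS_def)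

lemma spt_YY: "(\<And>j. j \<in> I \<Longrightarrow> spt n (y j)) \<Longrightarrow> spt n (YY y I)"
proof -
  assume a: "\<And>j. j \<in> I \<Longrightarrow> spt n (y j)"
  have "\<forall>x\<in>set xs. x \<in> I \<Longrightarrow> spt n (foldr mulR (map y xs) oneR)" for xs
    using a by (induction xs) (auto intro: spt_mulR)
  then show ?thesis unfolding YY_def
    by (cases "finite I") auto
qed

lemma spt_S0set: "I \<subseteq> {1..n} \<Longrightarrow> spt n (S0set n I)"
  by (simp add: S0set_YY spt_YY spt_yS subset_iff)

definition lead :: "R \<Rightarrow> nat set \<Rightarrow> int \<Rightarrow> bool" where
  "lead f A u \<longleftrightarrow> (\<forall>K. cf K f \<noteq> 0 \<longrightarrow> K = A \<or> \<Sum>A < \<Sum>K) \<and> cf A f = of_int u \<and> (u = 1 \<or> u = -1)"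

lemma cf_oneR: "cf K oneR = (if K = {} then 1 else 0)"
  by (simp add: oneR_def cf_single)

lemma lead_oneR: "lead oneR {} 1"
  by (simp add: lead_def cf_oneR)

lemma lead_S0:
  assumes "i \<in> {1..n}"
  shows "lead (S0 n i) {i} 1"
  unfolding lead_def
proof (intro conjI allI impI)
  fix K assume "cf K (S0 n i) \<noteq> 0"
  then have nz: "cf K (W n (tt i n)) \<noteq> 0" using S0_W[OF assms] by simp
  then obtain j where j: "j \<in> {1..n}" "K = {j}" using cf_W_other by blast
  then have "tt i n j \<noteq> 0" using nz cf_W_single by simp
  then have "i \<le> j" by (auto simp: tt_def split: if_splits)
  then show "K = {i} \<or> \<Sum>{i} < \<Sum>K" using j by auto
next
  show "cf {i} (S0 n i) = of_int 1" using assms by (simp add: S0_W cf_W_single tt_def)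
qed simp

lemma sum_disj_Un: "finite S \<Longrightarrow> finite T \<Longrightarrow> S \<inter> T = {} \<Longrightarrow> \<Sum>(S \<union> T) = \<Sum>S + (\<Sum>T :: nat)"
  by (simp add: sum.union_disjoint)

lemma lead_mult:
  assumes "spt n f" "spt n g" "lead f A u" "lead g B v" "A \<inter> B = {}" "A \<subseteq> {1..n}" "B \<subseteq> {1..n}"
  shows "lead (mulR f g) (A \<union> B) (sgnpair A B * u * v)"
proof -
  let ?P = "Pow {1..n}"
  have kf: "\<forall>k\<in>Poly_Mapping.keys f. snd k \<in> ?P" using assms(1) by (simp add: spt_def)
  have kg: "\<forall>k\<in>Poly_Mapping.keys g. snd k \<in> ?P" using assms(2) by (simp add: spt_def)
  define F where "F K S T = (if S \<inter> T = {} \<and> S \<union> T = K then of_int (sgnpair S T) * (cf S f * cf T g) else (0::P))" for K S T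
  have cfm: "cf K (mulR f g) = (\<Sum>S\<in>?P. \<Sum>T\<in>?P. F K S T)" for K
    unfolding F_def by (rule cf_mulR) (use kf kg in auto)
  have lf: "\<And>S. cf S f \<noteq> 0 \<Longrightarrow> S = A \<or> \<Sum>A < \<Sum>S" and lg: "\<And>T. cf T g \<noteq> 0 \<Longrightarrow> T = B \<or> \<Sum>B < \<Sum>T"
    using assms(3,4) by (auto simp: lead_def)
  have fin: "finite A" "finite B" using assms(6,7) finite_subset by auto
  have key: "F K S T \<noteq> 0 \<Longrightarrow> S \<in> ?P \<Longrightarrow> T \<in> ?P \<Longrightarrow> (S = A \<and> T = B \<and> K = A \<union> B) \<or> \<Sum>(A \<union> B) < \<Sum>K" for K S T
  proof -
    assume nz: "F K S T \<noteq> 0" and ST: "S \<in> ?P" "T \<in> ?P"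
    then have d: "S \<inter> T = {}" "S \<union> T = K" and nz2: "cf S f \<noteq> 0" "cf T g \<noteq> 0"
      by (auto simp: F_def split: if_splits)
    have finST: "finite S" "finite T" using ST finite_subset by auto
    have sK: "\<Sum>K = \<Sum>S + \<Sum>T" using d finST sum_disj_Un by metis
    have sAB: "\<Sum>(A \<union> B) = \<Sum>A + \<Sum>B" using assms(5) fin sum_disj_Un by metis
    show ?thesis using lf[OF nz2(1)] lg[OF nz2(2)] sK sAB d by auto
  qed
  show ?thesis
    unfolding lead_def
  proof (intro conjI allI impI)
    fix K assume "cf K (mulR f g) \<noteq> 0"
    then obtain S where S: "S \<in> ?P" "(\<Sum>T\<in>?P. F K S T) \<noteq> 0" unfolding cfm by (meson sum.not_neutral_contains_not_neutral)
    then obtain T where T: "T \<in> ?P" "F K S T \<noteq> 0" by (meson sum.not_neutral_contains_not_neutral)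
    show "K = A \<union> B \<or> \<Sum>(A \<union> B) < \<Sum>K" using key[OF T(2) S(1) T(1)] by auto
  next
    have AP: "A \<in> ?P" "B \<in> ?P" using assms(6,7) by auto
    have "cf (A \<union> B) (mulR f g) = (\<Sum>T\<in>?P. F (A \<union> B) A T)"
      unfolding cfm
    proof (rule sum_single_term[OF _ AP(1)])
      fix S assume "S \<in> ?P" "S \<noteq> A"
      then show "(\<Sum>T\<in>?P. F (A \<union> B) S T) = 0"
        using key[of "A \<union> B" S] by (intro sum.neutral) auto
    qed simp
    also have "\<dots> = F (A \<union> B) A B"
    proof (rule sum_single_term[OF _ AP(2)])
      fix T assume "T \<in> ?P" "T \<noteq> B"
      then show "F (A \<union> B) A T = 0" using key[of "A \<union> B" A T] AP by auto
    qed simp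
    also have "\<dots> = of_int (sgnpair A B * u * v)"
      using assms(3,4,5) by (simp add: F_def lead_def)
    finally show "cf (A \<union> B) (mulR f g) = of_int (sgnpair A B * u * v)" .
  next
    have "(-1::int) ^ k = 1 \<or> (-1::int) ^ k = -1" for k by (cases "even k") auto
    then have "sgnpair A B = 1 \<or> sgnpair A B = -1" by (simp add: sgnpair_def)
    then show "sgnpair A B * u * v = 1 \<or> sgnpair A B * u * v = -1" using assms(3,4) by (auto simp: lead_def)
  qed
qed

lemma lead_S0set:
  assumes "I \<subseteq> {1..n}"
  shows "\<exists>u. lead (S0set n I) I u"
proof -
  have "finite I" using assms finite_subset by auto
  then show ?thesis using assms
  proof (induction I rule: finite_linorder_min_induct)
    case empty
    then show ?case using lead_oneR by (auto simp: S0set_def)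
  next
    case (insert b A)
    then obtain u where u: "lead (S0set n A) A u" by auto
    have b: "b \<in> {1..n}" using insert by auto
    have e: "S0set n (insert b A) = mulR (S0 n b) (S0set n A)"
      using insert YY_insert_min[of A b "yS n"] S0set_YY b by (simp add: yS_def)
    have "lead (mulR (S0 n b) (S0set n A)) ({b} \<union> A) (sgnpair {b} A * 1 * u)"
      using insert b by (intro lead_mult[of n] lead_S0 u) (auto simp: S0_W spt_W spt_S0set)
    then show ?case using e by auto
  qed
qed

section \<open>Uniqueness\<close>

lemma evR_iota_cf: "evR f \<Longrightarrow> f = iota (cf {} f)"
proof (rule cf_eqI)
  fix S assume ev: "evR f"
  show "cf S f = cf S (iota (cf {} f))"
  proof (rule poly_mapping_eqI)
    fix \<alpha>
    have "S \<noteq> {} \<Longrightarrow> Poly_Mapping.lookup f (\<alpha>, S) = 0"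
      using ev by (auto simp: evR_def EV_def in_keys_iff)
    then show "Poly_Mapping.lookup (cf S f) \<alpha> = Poly_Mapping.lookup (cf S (iota (cf {} f))) \<alpha>"
      by (auto simp: lookup_cf lookup_iota)
  qed
qed

lemma uniq:
  assumes ev: "\<And>I. I \<in> Pow {1..n} \<Longrightarrow> evR (c I)"
    and z: "(\<Sum>I\<in>Pow {1..n}. mulR (c I) (S0set n I)) = 0"
  shows "\<forall>I\<in>Pow {1..n}. c I = 0"
proof (rule ccontr)
  assume "\<not> (\<forall>I\<in>Pow {1..n}. c I = 0)"
  then obtain I1 where "I1 \<in> Pow {1..n} \<and> c I1 \<noteq> 0" by blast
  then obtain I0 where I0: "I0 \<in> Pow {1..n} \<and> c I0 \<noteq> 0"
      and min: "\<And>I. I \<in> Pow {1..n} \<and> c I \<noteq> 0 \<Longrightarrow> \<Sum>I0 \<le> \<Sum>I"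
    using ex_has_least_nat[of "\<lambda>I. I \<in> Pow {1..n} \<and> c I \<noteq> 0" I1 "\<lambda>I. \<Sum>I"] by blast
  define p where "p I = cf {} (c I)" for I
  have cI: "I \<in> Pow {1..n} \<Longrightarrow> c I = iota (p I)" for I
  proof -
    assume "I \<in> Pow {1..n}"
    then have "evR (c I)" by (rule ev)
    then show ?thesis unfolding p_def by (rule evR_iota_cf)
  qed
  have "0 = cf I0 (\<Sum>I\<in>Pow {1..n}. mulR (c I) (S0set n I))" using z by simp
  also have "\<dots> = (\<Sum>I\<in>Pow {1..n}. p I * cf I0 (S0set n I))"
    by (simp add: cf_sum cI cf_iota_mult)
  also have "\<dots> = p I0 * cf I0 (S0set n I0)"
  proof (rule sum_single_term)
    show "I0 \<in> Pow {1..n}" using I0 by blast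
    fix I assume I: "I \<in> Pow {1..n}" "I \<noteq> I0"
    show "p I * cf I0 (S0set n I) = 0"
    proof (rule ccontr)
      assume "p I * cf I0 (S0set n I) \<noteq> 0"
      then have nz: "p I \<noteq> 0" "cf I0 (S0set n I) \<noteq> 0" by auto
      then have "c I \<noteq> 0" using cI[OF I(1)] by auto
      then have le: "\<Sum>I0 \<le> \<Sum>I" using min I by blast
      obtain u where "lead (S0set n I) I u" using lead_S0set I by blast
      then have "I0 = I \<or> \<Sum>I < \<Sum>I0" using nz(2) by (auto simp: lead_def)
      then show False
      proof
        assume "I0 = I" then show False using I(2) by simp
      next
        assume "\<Sum>I < \<Sum>I0" then show False using le by linarith
      qed
    qed
  qed simp
  finally have e: "p I0 * cf I0 (S0set n I0) = 0" by simp
  obtain u where "lead (S0set n I0) I0 u" using lead_S0set I0 by blast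
  then have "cf I0 (S0set n I0) = of_int u" "u \<noteq> 0" by (auto simp: lead_def)
  moreover have "p I0 \<noteq> 0" using I0 cI by auto
  ultimately show False using e by simp
qed

section \<open>Spanning\<close>

definition Sp :: "nat \<Rightarrow> R \<Rightarrow> bool" where
  "Sp n g \<longleftrightarrow> (\<exists>c. (\<forall>I. evR (c I)) \<and> g = (\<Sum>I\<in>Pow {1..n}. mulR (c I) (S0set n I)))"

lemma Sp_0: "Sp n 0"
  unfolding Sp_def by (rule exI[of _ "\<lambda>_. 0"]) simp

lemma Sp_add: "Sp n f \<Longrightarrow> Sp n g \<Longrightarrow> Sp n (f + g)"
  unfolding Sp_def
proof (elim exE conjE)
  fix c d assume "\<forall>I. evR (c I)" "f = (\<Sum>I\<in>Pow {1..n}. mulR (c I) (S0set n I))"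
    "\<forall>I. evR (d I)" "g = (\<Sum>I\<in>Pow {1..n}. mulR (d I) (S0set n I))"
  then show "\<exists>e. (\<forall>I. evR (e I)) \<and> f + g = (\<Sum>I\<in>Pow {1..n}. mulR (e I) (S0set n I))"
    by (intro exI[of _ "\<lambda>I. c I + d I"]) (simp add: evR_add mulR_add_left sum.distrib)
qed

lemma Sp_diff: "Sp n f \<Longrightarrow> Sp n g \<Longrightarrow> Sp n (f - g)"
  unfolding Sp_def
proof (elim exE conjE)
  fix c d assume "\<forall>I. evR (c I)" "f = (\<Sum>I\<in>Pow {1..n}. mulR (c I) (S0set n I))"
    "\<forall>I. evR (d I)" "g = (\<Sum>I\<in>Pow {1..n}. mulR (d I) (S0set n I))"
  then show "\<exists>e. (\<forall>I. evR (e I)) \<and> f - g = (\<Sum>I\<in>Pow {1..n}. mulR (e I) (S0set n I))"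
    by (intro exI[of _ "\<lambda>I. c I - d I"]) (simp add: evR_diff mulR_diff_left sum_subtractf)
qed

lemma Sp_sum: "finite A \<Longrightarrow> (\<And>a. a \<in> A \<Longrightarrow> Sp n (f a)) \<Longrightarrow> Sp n (\<Sum>a\<in>A. f a)"
  by (induction A rule: finite_induct) (auto intro: Sp_add Sp_0)

lemma evR_cmul: "evR f \<Longrightarrow> evR (frag_cmul k f)"
  unfolding evR_def using keys_cmul[of k f] by blast

lemma Sp_cmul: "Sp n g \<Longrightarrow> Sp n (frag_cmul k g)"
  unfolding Sp_def
proof (elim exE conjE)
  fix c assume "\<forall>I. evR (c I)" "g = (\<Sum>I\<in>Pow {1..n}. mulR (c I) (S0set n I))"
  then show "\<exists>e. (\<forall>I. evR (e I)) \<and> frag_cmul k g = (\<Sum>I\<in>Pow {1..n}. mulR (e I) (S0set n I))"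
    by (intro exI[of _ "\<lambda>I. frag_cmul k (c I)"]) (simp add: evR_cmul mulR_cmul_left frag_cmul_sum)
qed

lemma fsR_S0set: "I \<subseteq> {1..n} \<Longrightarrow> fsR (S0set n I)"
  by (simp add: S0set_YY fsR_YY fsR_yS)

lemma Sp_evmul: "evR e \<Longrightarrow> Sp n g \<Longrightarrow> Sp n (mulR e g)"
  unfolding Sp_def
proof (elim exE conjE)
  fix c assume ee: "evR e" and c: "\<forall>I. evR (c I)" "g = (\<Sum>I\<in>Pow {1..n}. mulR (c I) (S0set n I))"
  have "mulR e g = (\<Sum>I\<in>Pow {1..n}. mulR (mulR e (c I)) (S0set n I))"
    unfolding c(2) mulR_sum_right[OF finite_Pow_iff[THEN iffD2, OF finite_atLeastAtMost]]
    by (intro sum.cong refl) (simp add: mulR_assoc' fsR_evR ee c fsR_S0set)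
  then show "\<exists>d. (\<forall>I. evR (d I)) \<and> mulR e g = (\<Sum>I\<in>Pow {1..n}. mulR (d I) (S0set n I))"
    using ee c by (intro exI[of _ "\<lambda>I. mulR e (c I)"]) (simp add: evR_mulR)
qed

lemma Sp_S0set: "J \<subseteq> {1..n} \<Longrightarrow> Sp n (S0set n J)"
  unfolding Sp_def
proof (intro exI[of _ "\<lambda>I. if I = J then oneR else 0"] conjI allI)
  fix I show "evR (if I = J then oneR else 0)" by (simp add: evR_def oneR_def EV_def)
next
  have pt: "mulR (if I = J then oneR else 0) (S0set n I) = (if I = J then S0set n J else 0)" for I by simp
  assume "J \<subseteq> {1..n}"
  then show "S0set n J = (\<Sum>I\<in>Pow {1..n}. mulR (if I = J then oneR else 0) (S0set n I))"
    unfolding pt by simp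
qed

lemma S0_S0set:
  assumes "i \<in> {1..n}" "I \<subseteq> {1..n}"
  shows "mulR (S0 n i) (S0set n I) = (if i \<in> I then 0 else frag_cmul ((-1) ^ card {t\<in>I. t < i}) (S0set n (insert i I)))"
proof -
  have fI: "finite I" using assms finite_subset by auto
  have "S0 n i = yS n i" using assms by (simp add: yS_def)
  then show ?thesis using y_YY[where y="yS n" and S=I and s=i, OF odR_yS fI] assms
    by (simp add: S0set_YY)
qed

lemma Sp_S0mul:
  assumes "i \<in> {1..n}" "Sp n g"
  shows "Sp n (mulR (S0 n i) g)"
proof -
  obtain c where c: "\<forall>I. evR (c I)" "g = (\<Sum>I\<in>Pow {1..n}. mulR (c I) (S0set n I))"
    using assms(2) by (auto simp: Sp_def)
  have fS: "fsR (S0 n i)" using assms by (simp add: S0_W fsR_W)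
  have "mulR (S0 n i) g = (\<Sum>I\<in>Pow {1..n}. mulR (c I) (mulR (S0 n i) (S0set n I)))"
    unfolding c(2) mulR_sum_right[OF finite_Pow_iff[THEN iffD2, OF finite_atLeastAtMost]]
  proof (intro sum.cong refl)
    fix I assume I: "I \<in> Pow {1..n}"
    have "mulR (S0 n i) (mulR (c I) (S0set n I)) = mulR (mulR (S0 n i) (c I)) (S0set n I)"
      using I fS c by (simp add: mulR_assoc' fsR_evR fsR_S0set)
    also have "mulR (S0 n i) (c I) = mulR (c I) (S0 n i)"
      using even_comm[of "c I" "S0 n i"] c by (simp add: evR_def)
    also have "mulR (mulR (c I) (S0 n i)) (S0set n I) = mulR (c I) (mulR (S0 n i) (S0set n I))"
      using I fS c by (simp add: mulR_assoc' fsR_evR fsR_S0set)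
    finally show "mulR (S0 n i) (mulR (c I) (S0set n I)) = mulR (c I) (mulR (S0 n i) (S0set n I))" .
  qed
  also have "Sp n \<dots>"
  proof (rule Sp_sum)
    fix I assume I: "I \<in> Pow {1..n}"
    have "Sp n (mulR (S0 n i) (S0set n I))"
    proof (cases "i \<in> I")
      case True then show ?thesis using S0_S0set[of i n I] assms I by (simp add: Sp_0)
    next
      case False
      have "insert i I \<subseteq> {1..n}" using assms I by auto
      then have "Sp n (S0set n (insert i I))" by (rule Sp_S0set)
      then show ?thesis using S0_S0set[of i n I] assms I False by (simp add: Sp_cmul)
    qed
    then show "Sp n (mulR (c I) (mulR (S0 n i) (S0set n I)))" using c by (intro Sp_evmul[of "c I"]) auto
  qed simp
  finally show ?thesis .
qed

lemma omv_decomp: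
  assumes "i \<in> {1..n}"
  shows "omv i = S0 n i - (\<Sum>j\<in>{Suc i..n}. mulR (iota (tt i n j)) (omv j))"
proof -
  have pt: "mulR (iota (tt i n j)) (omv j) = (if j = i then omv j else 0) + (if j \<in> {Suc i..n} then mulR (iota (tt i n j)) (omv j) else 0)"
    if "j \<in> {1..n}" for j
  proof -
    consider "j < i" | "j = i" | "i < j" by linarith
    then show ?thesis
    proof cases
      case 1 then show ?thesis by (simp add: tt_def)
    next
      case 2 then show ?thesis by (simp add: tt_def)
    next
      case 3 then show ?thesis using that by simp
    qed
  qed
  have "S0 n i = (\<Sum>j\<in>{1..n}. mulR (iota (tt i n j)) (omv j))" using assms by (simp add: S0_W W_def)
  also have "\<dots> = (\<Sum>j\<in>{1..n}. (if j = i then omv j else 0) + (if j \<in> {Suc i..n} then mulR (iota (tt i n j)) (omv j) else 0))"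
    by (rule sum.cong) (simp_all add: pt)
  also have "\<dots> = omv i + (\<Sum>j\<in>{Suc i..n}. mulR (iota (tt i n j)) (omv j))"
  proof -
    have "{1..n} \<inter> {Suc i..n} = {Suc i..n}" using assms by auto
    moreover have "(\<Sum>j\<in>{1..n}. if j \<in> {Suc i..n} then mulR (iota (tt i n j)) (omv j) else 0) = (\<Sum>j\<in>{1..n} \<inter> {Suc i..n}. mulR (iota (tt i n j)) (omv j))"
      by (rule sum.inter_restrict[symmetric]) simp
    moreover have "(\<Sum>j\<in>{1..n}. if j = i then omv j else 0) = omv i" using assms by simp
    ultimately show ?thesis by (simp only: sum.distrib)
  qed
  finally show ?thesis by simp
qed

lemma Sp_omv:
  assumes "i \<in> {1..n}" "Sp n g"
  shows "Sp n (mulR (omv i) g)"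
  using assms
proof (induction "n - i" arbitrary: i rule: less_induct)
  case less
  obtain c where c: "\<forall>I. evR (c I)" "g = (\<Sum>I\<in>Pow {1..n}. mulR (c I) (S0set n I))"
    using less.prems(2) by (auto simp: Sp_def)
  have fg: "fsR g" unfolding c(2)
    by (intro fsR_sum fsR_mulR fsR_evR fsR_S0set) (use c in auto)
  have "mulR (omv i) g = mulR (S0 n i) g - (\<Sum>j\<in>{Suc i..n}. mulR (iota (tt i n j)) (mulR (omv j) g))"
    apply (subst omv_decomp[OF less.prems(1)])
    apply (simp add: mulR_diff_left mulR_sum_left mulR_assoc' fsR_iota fsR_omv fg)
    done
  also have "Sp n \<dots>"
  proof (rule Sp_diff)
    show "Sp n (mulR (S0 n i) g)" by (rule Sp_S0mul[OF less.prems])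
    show "Sp n (\<Sum>j\<in>{Suc i..n}. mulR (iota (tt i n j)) (mulR (omv j) g))"
    proof (rule Sp_sum)
      fix j assume j: "j \<in> {Suc i..n}"
      then have "Sp n (mulR (omv j) g)" using less by (intro less.hyps) auto
      then show "Sp n (mulR (iota (tt i n j)) (mulR (omv j) g))" by (rule Sp_evmul[OF evR_iota])
    qed simp
  qed
  finally show ?case .
qed

lemma YY_omv: "finite S \<Longrightarrow> YY omv S = frag_of (0, S)"
proof (induction S rule: finite_linorder_min_induct)
  case empty then show ?case by (simp add: oneR_def)
next
  case (insert b A)
  have e: "{t \<in> A. t < b} = {}" using insert by auto
  have s: "sgnpair {b} A = 1" unfolding sgnpair_single_left e by simp
  have bA: "b \<notin> A" using insert by auto
  have e: "YY omv (insert b A) = mulR (omv b) (YY omv A)" using insert by (intro YY_insert_min) auto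
  show ?case unfolding e insert.IH using bA s by (simp add: omv_def mulR_frag_of MM_def)
qed

lemma Sp_omegaS: "S \<subseteq> {1..n} \<Longrightarrow> Sp n (YY omv S)"
proof -
  assume S: "S \<subseteq> {1..n}"
  then have "finite S" using finite_subset by auto
  then show ?thesis using S
  proof (induction S rule: finite_linorder_min_induct)
    case empty then show ?case using Sp_S0set[of "{}" n] by (simp add: S0set_def)
  next
    case (insert b A)
    then have "YY omv (insert b A) = mulR (omv b) (YY omv A)" by (intro YY_insert_min) auto
    then show ?case using insert by (auto intro: Sp_omv)
  qed
qed

lemma Sp_spt: "spt n f \<Longrightarrow> Sp n f"
proof -
  assume "spt n f"
  then have "Poly_Mapping.keys f \<subseteq> {k. snd k \<subseteq> {1..n}}" by (auto simp: spt_def)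
  then show ?thesis
  proof (induction f rule: frag_induction)
    case zero then show ?case by (rule Sp_0)
  next
    case (diff a b) then show ?case by (rule Sp_diff)
  next
    case (one x)
    obtain \<alpha> S where x: "x = (\<alpha>, S)" by (cases x)
    have S: "S \<subseteq> {1..n}" using one x by simp
    then have fS: "finite S" using finite_subset by auto
    have eq: "frag_of x = mulR (iota (frag_of \<alpha>)) (YY omv S)"
      using fS by (simp add: x YY_omv mulR_frag_of MM_def)
    show ?case unfolding eq by (rule Sp_evmul[OF evR_iota Sp_omegaS[OF S]])
  qed
qed

definition Pin :: "nat \<Rightarrow> P \<Rightarrow> bool" where
  "Pin n p \<longleftrightarrow> (\<forall>\<alpha>\<in>Poly_Mapping.keys p. Poly_Mapping.keys \<alpha> \<subseteq> {1..n})"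

lemma Pin_add: "Pin n p \<Longrightarrow> Pin n q \<Longrightarrow> Pin n (p + q)"
  unfolding Pin_def using keys_add[of p q] by blast
lemma Pin_minus: "Pin n p \<Longrightarrow> Pin n (- p)"
  unfolding Pin_def by simp
lemma Pin_0[simp]: "Pin n 0" by (simp add: Pin_def)
lemma Pin_1[simp]: "Pin n 1" by (simp add: Pin_def)
lemma Pin_mult:
  assumes "Pin n p" "Pin n q" shows "Pin n (p * q)"
  unfolding Pin_def
proof
  fix \<gamma> assume "\<gamma> \<in> Poly_Mapping.keys (p * q)"
  then obtain a b where ab: "a \<in> Poly_Mapping.keys p" "b \<in> Poly_Mapping.keys q" "\<gamma> = a + b"
    using keys_mult[of p q] by blast
  have "Poly_Mapping.keys (a + b) \<subseteq> Poly_Mapping.keys a \<union> Poly_Mapping.keys b" by (rule keys_add)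
  then show "Poly_Mapping.keys \<gamma> \<subseteq> {1..n}" using ab assms by (auto simp: Pin_def)
qed
lemma Pin_XX: "j \<in> {1..n} \<Longrightarrow> Pin n (XX j)" by (simp add: Pin_def XX_def)
lemma Pin_power: "Pin n p \<Longrightarrow> Pin n (p ^ k)" by (induction k) (auto intro: Pin_mult)
lemma Pin_hh: "(\<And>v. v \<in> set L \<Longrightarrow> v \<in> {1..n}) \<Longrightarrow> Pin n (hh k L)"
  by (induction k L rule: hh.induct) (auto intro!: Pin_add Pin_mult Pin_XX)
lemma Pin_tt: "1 \<le> i \<Longrightarrow> Pin n (tt i n j)"
  unfolding tt_def by (auto intro!: Pin_mult Pin_power Pin_minus Pin_hh)

lemma Rn_add: "f \<in> Rn n \<Longrightarrow> g \<in> Rn n \<Longrightarrow> f + g \<in> Rn n"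
  unfolding Rn_def using keys_add[of f g] by blast
lemma Rn_diff: "f \<in> Rn n \<Longrightarrow> g \<in> Rn n \<Longrightarrow> f - g \<in> Rn n"
  unfolding Rn_def using keys_diff[of f g] by blast
lemma Rn_0[simp]: "0 \<in> Rn n" by (simp add: Rn_def)
lemma Rn_oneR[simp]: "oneR \<in> Rn n" by (simp add: Rn_def oneR_def)
lemma Rn_sum: "(\<And>i. i \<in> A \<Longrightarrow> f i \<in> Rn n) \<Longrightarrow> (\<Sum>i\<in>A. f i) \<in> Rn n"
  by (induction A rule: infinite_finite_induct) (auto intro: Rn_add)
lemma Rn_mulR:
  assumes "f \<in> Rn n" "g \<in> Rn n" shows "mulR f g \<in> Rn n"
  unfolding Rn_def mem_Collect_eq
proof
  fix k assume "k \<in> Poly_Mapping.keys (mulR f g)"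
  then obtain a b where ab: "a \<in> Poly_Mapping.keys f" "b \<in> Poly_Mapping.keys g" "k = (fst a + fst b, snd a \<union> snd b)"
    using keys_mulR by blast
  have "Poly_Mapping.keys (fst a + fst b) \<subseteq> Poly_Mapping.keys (fst a) \<union> Poly_Mapping.keys (fst b)" by (rule keys_add)
  then show "Poly_Mapping.keys (fst k) \<subseteq> {1..n} \<and> snd k \<subseteq> {1..n}" using ab assms by (auto simp: Rn_def)
qed
lemma Rn_iota: "Pin n p \<Longrightarrow> iota p \<in> Rn n"
  unfolding Rn_def Pin_def mem_Collect_eq
proof
  fix k assume p: "\<forall>\<alpha>\<in>Poly_Mapping.keys p. Poly_Mapping.keys \<alpha> \<subseteq> {1..n}" and k: "k \<in> Poly_Mapping.keys (iota p)"
  obtain \<alpha> S where kk: "k = (\<alpha>, S)" by (cases k)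
  have "Poly_Mapping.lookup (iota p) (\<alpha>, S) \<noteq> 0" using k kk by (simp add: in_keys_iff)
  then have "S = {}" "\<alpha> \<in> Poly_Mapping.keys p" by (auto simp: lookup_iota in_keys_iff split: if_splits)
  then show "Poly_Mapping.keys (fst k) \<subseteq> {1..n} \<and> snd k \<subseteq> {1..n}" using p kk by auto
qed
lemma Rn_omv: "j \<in> {1..n} \<Longrightarrow> omv j \<in> Rn n" by (simp add: Rn_def omv_def)
lemma Rn_W: "(\<And>j. j \<in> {1..n} \<Longrightarrow> Pin n (c j)) \<Longrightarrow> W n c \<in> Rn n"
  unfolding W_def by (auto intro!: Rn_sum Rn_mulR Rn_iota Rn_omv)
lemma Rn_S0: "i \<in> {1..n} \<Longrightarrow> S0 n i \<in> Rn n"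
  by (simp add: S0_W Rn_W Pin_tt)
lemma Rn_YY: "(\<And>j. j \<in> I \<Longrightarrow> y j \<in> Rn n) \<Longrightarrow> YY y I \<in> Rn n"
proof -
  assume a: "\<And>j. j \<in> I \<Longrightarrow> y j \<in> Rn n"
  have "\<forall>x\<in>set xs. x \<in> I \<Longrightarrow> foldr mulR (map y xs) oneR \<in> Rn n" for xs
    using a by (induction xs) (auto intro: Rn_mulR)
  then show ?thesis unfolding YY_def by (cases "finite I") auto
qed
lemma Rn_S0set: "I \<subseteq> {1..n} \<Longrightarrow> S0set n I \<in> Rn n"
  by (simp add: S0set_YY Rn_YY yS_def Rn_S0 subset_iff)

lemma act_S0: "1 \<le> a \<Longrightarrow> a < n \<Longrightarrow> i \<in> {1..n} \<Longrightarrow> act a (S0 n i) = S0 n i"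
  by (simp add: S0_W act_W inv_tt cong: W_cong)

lemma act_YY: "(\<And>j. fsR (y j)) \<Longrightarrow> act a (YY y S) = YY (\<lambda>j. act a (y j)) S"
proof -
  assume fs: "\<And>j. fsR (y j)"
  have "act a (foldr mulR (map y xs) oneR) = foldr mulR (map (\<lambda>j. act a (y j)) xs) oneR" for xs
    by (induction xs) (simp_all add: act_mult fs fsR_foldr)
  then show ?thesis by (simp add: YY_def)
qed

lemma act_S0set: "1 \<le> a \<Longrightarrow> a < n \<Longrightarrow> I \<subseteq> {1..n} \<Longrightarrow> act a (S0set n I) = S0set n I"
proof -
  assume a: "1 \<le> a" "a < n" and I: "I \<subseteq> {1..n}"
  have fI: "finite I" using I finite_subset by auto
  have "act a (S0set n I) = YY (\<lambda>j. act a (yS n j)) I" by (simp add: S0set_YY[OF I] act_YY fsR_yS)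
  also have "\<dots> = YY (yS n) I"
    by (rule YY_cong[OF fI]) (use I a in \<open>auto simp: yS_def act_S0\<close>)
  finally show ?thesis using S0set_YY[OF I] by simp
qed

lemma act_evR: "evR f \<Longrightarrow> evR (act a f)"
  using evR_iota_cf[of f] by (metis act_iota evR_iota)

definition RK :: "nat \<Rightarrow> mon set" where
  "RK n = {k. Poly_Mapping.keys (fst k) \<subseteq> {1..n} \<and> snd k \<subseteq> {1..n}}"

definition rr :: "nat \<Rightarrow> R \<Rightarrow> R" where
  "rr n f = frag_extend (\<lambda>k. if k \<in> RK n then frag_of k else 0) f"

lemma rr_add: "rr n (f + g) = rr n f + rr n g" by (simp add: rr_def frag_extend_add)
lemma rr_diff: "rr n (f - g) = rr n f - rr n g" by (simp add: rr_def frag_extend_diff)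
lemma rr_0[simp]: "rr n 0 = 0" by (simp add: rr_def)
lemma rr_sum: "finite A \<Longrightarrow> rr n (\<Sum>i\<in>A. f i) = (\<Sum>i\<in>A. rr n (f i))"
  by (induction A rule: finite_induct) (simp_all add: rr_add)

lemma rr_id: "f \<in> Rn n \<Longrightarrow> rr n f = f"
proof -
  assume "f \<in> Rn n"
  then have "Poly_Mapping.keys f \<subseteq> RK n" by (auto simp: Rn_def RK_def)
  then show ?thesis
    by (induction f rule: frag_induction) (simp_all add: rr_def frag_extend_diff)
qed

lemma keys_add_nat: "Poly_Mapping.keys (\<alpha> + \<beta> :: nat \<Rightarrow>\<^sub>0 nat) = Poly_Mapping.keys \<alpha> \<union> Poly_Mapping.keys \<beta>"
  by (auto simp: in_keys_iff lookup_add)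

lemma rr_mult: "rr n (mulR f g) = mulR (rr n f) (rr n g)"
proof (induction f rule: frag_induction[OF subset_UNIV])
  case 1 then show ?case by (simp add: rr_def)
next
  case (3 a b) then show ?case by (simp add: mulR_diff_left rr_diff)
next
  case (2 x)
  show ?case
  proof (induction g rule: frag_induction[OF subset_UNIV])
    case 1 then show ?case by (simp add: rr_def)
  next
    case (3 a b) then show ?case by (simp add: mulR_diff_right rr_diff)
  next
    case (2 y)
    show ?case
    proof (cases "snd x \<inter> snd y = {}")
      case True
      have "(fst x + fst y, snd x \<union> snd y) \<in> RK n \<longleftrightarrow> x \<in> RK n \<and> y \<in> RK n"
        by (auto simp: RK_def keys_add_nat)
      then show ?thesis using True
        by (simp add: rr_def mulR_frag_of MM_def frag_extend_cmul)
    next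
      case False
      then show ?thesis by (simp add: rr_def mulR_frag_of MM_def)
    qed
  qed
qed

lemma rr_Rn: "rr n f \<in> Rn n"
proof -
  have "Poly_Mapping.keys (rr n f) \<subseteq> (\<Union>k\<in>Poly_Mapping.keys f. Poly_Mapping.keys (if k \<in> RK n then frag_of k else 0))"
    unfolding rr_def by (rule keys_frag_extend)
  also have "\<dots> \<subseteq> RK n" by (auto split: if_splits)
  finally show ?thesis by (auto simp: Rn_def RK_def)
qed

lemma rr_evR: "evR f \<Longrightarrow> evR (rr n f)"
proof -
  assume "evR f"
  then have "Poly_Mapping.keys f \<subseteq> EV" by (simp add: evR_def)
  moreover have "Poly_Mapping.keys (rr n f) \<subseteq> (\<Union>k\<in>Poly_Mapping.keys f. Poly_Mapping.keys (if k \<in> RK n then frag_of k else 0))"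
    unfolding rr_def by (rule keys_frag_extend)
  moreover have "(\<Union>k\<in>Poly_Mapping.keys f. Poly_Mapping.keys (if k \<in> RK n then frag_of k else 0)) \<subseteq> Poly_Mapping.keys f"
    by (auto split: if_splits)
  ultimately show ?thesis unfolding evR_def by blast
qed

lemma spt_Rn: "f \<in> Rn n \<Longrightarrow> spt n f" by (simp add: Rn_def spt_def)

lemma decomp:
  assumes "f \<in> Rn n"
  shows "\<exists>c. (\<forall>I. evR (c I) \<and> c I \<in> Rn n) \<and> f = (\<Sum>I\<in>Pow {1..n}. mulR (c I) (S0set n I))"
proof -
  obtain c where c: "\<forall>I. evR (c I)" "f = (\<Sum>I\<in>Pow {1..n}. mulR (c I) (S0set n I))"
    using Sp_spt[OF spt_Rn[OF assms]] by (auto simp: Sp_def)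
  have "f = rr n f" using rr_id[OF assms] by simp
  also have "\<dots> = (\<Sum>I\<in>Pow {1..n}. mulR (rr n (c I)) (S0set n I))"
    unfolding c(2) by (simp add: rr_sum rr_mult rr_id Rn_S0set)
  finally show ?thesis using c(1) by (intro exI[of _ "\<lambda>I. rr n (c I)"]) (simp add: rr_evR rr_Rn)
qed

lemma decomp_inv:
  assumes c: "\<And>I. evR (c I)" and f: "f = (\<Sum>I\<in>Pow {1..n}. mulR (c I) (S0set n I))"
    and a: "1 \<le> a" "a < n" and inv: "act a f = f"
  shows "\<forall>I\<in>Pow {1..n}. act a (c I) = c I"
proof -
  have "act a f = (\<Sum>I\<in>Pow {1..n}. mulR (act a (c I)) (S0set n I))"
    unfolding f act_sum[OF finite_Pow_iff[THEN iffD2, OF finite_atLeastAtMost]]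
    by (intro sum.cong refl) (simp add: act_mult fsR_evR c fsR_S0set act_S0set[OF a(1) a(2)])
  then have "(\<Sum>I\<in>Pow {1..n}. mulR (act a (c I) - c I) (S0set n I)) = 0"
    using inv f by (simp add: mulR_diff_left sum_subtractf)
  then have "\<forall>I\<in>Pow {1..n}. act a (c I) - c I = 0"
    by (rule uniq[rotated]) (simp add: evR_diff act_evR c)
  then show ?thesis by simp
qed

section \<open>Homogeneity\<close>

definition dg :: "(nat \<Rightarrow>\<^sub>0 nat) \<Rightarrow> nat" where
  "dg \<alpha> = sum (Poly_Mapping.lookup \<alpha>) (Poly_Mapping.keys \<alpha>)"

lemma dg_add: "dg (\<alpha> + \<beta>) = dg \<alpha> + dg \<beta>"
  unfolding dg_def using setsum_keys_plus_distrib[of "\<lambda>k x. x" \<alpha> \<beta>] by (simp add: lookup_add)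

lemma dg_0[simp]: "dg 0 = 0" by (simp add: dg_def)
lemma dg_single[simp]: "dg (Poly_Mapping.single j k) = k" by (simp add: dg_def)

lemma bideg_eq: "bideg k = (2 * int (dg (fst k)) - 2 * int (\<Sum>(snd k)), 2 * int (card (snd k)))"
  by (simp add: bideg_def dg_def)

definition Phom :: "nat \<Rightarrow> P \<Rightarrow> bool" where
  "Phom m p \<longleftrightarrow> (\<forall>\<alpha>\<in>Poly_Mapping.keys p. dg \<alpha> = m)"

lemma Phom_add: "Phom m p \<Longrightarrow> Phom m q \<Longrightarrow> Phom m (p + q)"
  unfolding Phom_def using keys_add[of p q] by blast
lemma Phom_minus: "Phom m p \<Longrightarrow> Phom m (- p)" unfolding Phom_def by simp
lemma Phom_0[simp]: "Phom m 0" by (simp add: Phom_def)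
lemma Phom_1[simp]: "Phom 0 1" by (simp add: Phom_def)
lemma Phom_mult:
  assumes "Phom m p" "Phom m' q" shows "Phom (m + m') (p * q)"
  unfolding Phom_def
proof
  fix \<gamma> assume "\<gamma> \<in> Poly_Mapping.keys (p * q)"
  then obtain a b where ab: "a \<in> Poly_Mapping.keys p" "b \<in> Poly_Mapping.keys q" "\<gamma> = a + b"
    using keys_mult[of p q] by blast
  then show "dg \<gamma> = m + m'" using assms by (simp add: Phom_def dg_add)
qed
lemma Phom_XX: "Phom 1 (XX j)" by (simp add: Phom_def XX_def)
lemma Phom_power: "Phom m p \<Longrightarrow> Phom (k * m) (p ^ k)"
  by (induction k) (auto dest: Phom_mult)
lemma Phom_neg1pow: "Phom 0 ((-1) ^ k)"
  using Phom_power[of 0 "-1" k] by (simp add: Phom_minus)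
lemma Phom_hh: "Phom k (hh k L)"
proof (induction k L rule: hh.induct)
  case (3 k v vs)
  then show ?case using Phom_mult[OF Phom_XX[of v] "3.IH"(1)] by (auto intro: Phom_add)
qed simp_all

lemma Phom_tt: "i \<le> j \<Longrightarrow> Phom (j - i) (tt i n j)"
  unfolding tt_def using Phom_mult[OF Phom_neg1pow Phom_hh] by auto

lemma homR_add: "homR d f \<Longrightarrow> homR d g \<Longrightarrow> homR d (f + g)"
  unfolding homR_def using keys_add[of f g] by blast
lemma homR_0[simp]: "homR d 0" by (simp add: homR_def)
lemma homR_sum: "(\<And>i. i \<in> A \<Longrightarrow> homR d (f i)) \<Longrightarrow> homR d (\<Sum>i\<in>A. f i)"
  by (induction A rule: infinite_finite_induct) (auto intro: homR_add)
lemma homR_cmul: "homR d f \<Longrightarrow> homR d (frag_cmul c f)"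
  unfolding homR_def using keys_cmul[of c f] by blast

lemma homR_mulR:
  assumes "homR (a1, b1) f" "homR (a2, b2) g" "fsR f" "fsR g"
  shows "homR (a1 + a2, b1 + b2) (mulR f g)"
  unfolding homR_def
proof
  fix k assume "k \<in> Poly_Mapping.keys (mulR f g)"
  then obtain a b where ab: "a \<in> Poly_Mapping.keys f" "b \<in> Poly_Mapping.keys g"
     "snd a \<inter> snd b = {}" "k = (fst a + fst b, snd a \<union> snd b)"
    using keys_mulR by blast
  have fin: "finite (snd a)" "finite (snd b)" using assms(3,4) ab by (auto simp: fsR_def FS_def)
  have ba: "bideg a = (a1, b1)" "bideg b = (a2, b2)" using assms(1,2) ab by (auto simp: homR_def)
  have "\<Sum>(snd a \<union> snd b) = \<Sum>(snd a) + \<Sum>(snd b)" using fin ab(3) by (simp add: sum.union_disjoint)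
  moreover have "card (snd a \<union> snd b) = card (snd a) + card (snd b)" using fin ab(3) by (simp add: card_Un_disjoint)
  ultimately show "bideg k = (a1 + a2, b1 + b2)" using ba ab(4) by (simp add: bideg_eq dg_add algebra_simps)
qed

lemma homR_iota: "Phom m p \<Longrightarrow> homR (2 * int m, 0) (iota p)"
  unfolding homR_def
proof
  fix k assume p: "Phom m p" and k: "k \<in> Poly_Mapping.keys (iota p)"
  obtain \<alpha> S where kk: "k = (\<alpha>, S)" by (cases k)
  have "Poly_Mapping.lookup (iota p) (\<alpha>, S) \<noteq> 0" using k kk by (simp add: in_keys_iff)
  then have "S = {}" "\<alpha> \<in> Poly_Mapping.keys p" by (auto simp: lookup_iota in_keys_iff split: if_splits)
  then show "bideg k = (2 * int m, 0)" using p kk by (simp add: bideg_eq Phom_def)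
qed

lemma homR_omv: "homR (- 2 * int j, 2) (omv j)"
  by (simp add: homR_def omv_def bideg_eq)

lemma homR_S0: "i \<in> {1..n} \<Longrightarrow> homR (- 2 * int i, 2) (S0 n i)"
  unfolding S0_W W_def
proof (intro homR_sum)
  fix j assume i: "i \<in> {1..n}" and j: "j \<in> {1..n}"
  show "homR (- 2 * int i, 2) (mulR (iota (tt i n j)) (omv j))"
  proof (cases "i \<le> j")
    case True
    have "homR (2 * int (j - i) + - 2 * int j, 0 + 2) (mulR (iota (tt i n j)) (omv j))"
      by (intro homR_mulR homR_iota Phom_tt True homR_omv fsR_iota fsR_omv)
    then show ?thesis using True by (simp add: of_nat_diff algebra_simps)
  next
    case False
    then have "tt i n j = 0" by (simp add: tt_def)
    then show ?thesis by simp
  qed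
qed

lemma homR_oneR: "homR (0, 0) oneR" by (simp add: homR_def oneR_def bideg_eq)

lemma homR_S0set: "I \<subseteq> {1..n} \<Longrightarrow> homR (- 2 * int (\<Sum>I), 2 * int (card I)) (S0set n I)"
proof -
  assume I: "I \<subseteq> {1..n}"
  then have "finite I" using finite_subset by auto
  then show ?thesis using I
  proof (induction I rule: finite_linorder_min_induct)
    case empty then show ?case using homR_oneR by (simp add: S0set_def)
  next
    case (insert b A)
    have b: "b \<in> {1..n}" and A: "A \<subseteq> {1..n}" using insert by auto
    have bA: "b \<notin> A" using insert by auto
    have e: "S0set n (insert b A) = mulR (S0 n b) (S0set n A)"
      using insert YY_insert_min[of A b "yS n"] S0set_YY b by (simp add: yS_def)
    have "homR (- 2 * int b + - 2 * int (\<Sum>A), 2 + 2 * int (card A)) (mulR (S0 n b) (S0set n A))"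
      using insert A by (intro homR_mulR homR_S0 b fsR_S0set) (auto simp: S0_W fsR_W)
    then show ?case using e bA insert by (simp add: algebra_simps)
  qed
qed

lemma finPow: "finite (Pow {1..(n::nat)})" by simp

lemma Tcar_props:
  assumes "c \<in> Tcar n" "I \<subseteq> {1..n}"
  shows "evR (c I)" "c I \<in> Rn n" "\<And>a. a \<in> {1..<n} \<Longrightarrow> act a (c I) = c I"
proof -
  have s: "c I \<in> symP n" using assms by (simp add: Tcar_def)
  then show "evR (c I)" unfolding symP_def evR_def EV_def by blast
  show "c I \<in> Rn n" using s by (simp add: symP_def Rinv_def)
  show "\<And>a. a \<in> {1..<n} \<Longrightarrow> act a (c I) = c I" using s by (simp add: symP_def Rinv_def)
qed

lemma Tcar_out: "c \<in> Tcar n \<Longrightarrow> \<not> I \<subseteq> {1..n} \<Longrightarrow> c I = 0"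
  by (simp add: Tcar_def)

lemma Phi_add: "Phi n (\<lambda>I. c I + d I) = Phi n c + Phi n d"
  by (simp add: Phi_def mulR_add_left sum.distrib)

lemma Phi_diff: "Phi n (\<lambda>I. c I - d I) = Phi n c - Phi n d"
  by (simp add: Phi_def mulR_diff_left sum_subtractf)

lemma Phi_tone: "Phi n tone = oneR"
proof -
  have "Phi n tone = mulR (tone {}) (S0set n {})"
    unfolding Phi_def by (rule sum_single_term) (auto simp: tone_def)
  then show ?thesis by (simp add: tone_def S0set_def)
qed

lemma Phi_Rinv:
  assumes "c \<in> Tcar n"
  shows "Phi n c \<in> Rinv n"
proof -
  have Rn: "Phi n c \<in> Rn n"
    unfolding Phi_def using Tcar_props[OF assms] by (auto intro!: Rn_sum Rn_mulR Rn_S0set)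
  have "act a (Phi n c) = Phi n c" if a: "a \<in> {1..<n}" for a
    unfolding Phi_def act_sum[OF finPow]
  proof (intro sum.cong refl)
    fix I assume I: "I \<in> Pow {1..n}"
    show "act a (mulR (c I) (S0set n I)) = mulR (c I) (S0set n I)"
      using Tcar_props[OF assms] I a
      by (simp add: act_mult fsR_evR fsR_S0set act_S0set)
  qed
  then show ?thesis using Rn by (simp add: Rinv_def)
qed

lemma Phi_inj: "inj_on (Phi n) (Tcar n)"
proof (rule inj_onI)
  fix c d assume c: "c \<in> Tcar n" and d: "d \<in> Tcar n" and e: "Phi n c = Phi n d"
  have "(\<Sum>I\<in>Pow {1..n}. mulR (c I - d I) (S0set n I)) = 0"
    using e Phi_diff[of n c d] by (simp add: Phi_def)
  then have "\<forall>I\<in>Pow {1..n}. c I - d I = 0"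
    by (rule uniq[rotated]) (use Tcar_props(1)[OF c] Tcar_props(1)[OF d] in \<open>auto intro: evR_diff\<close>)
  then show "c = d"
    using Tcar_out[OF c] Tcar_out[OF d] by (intro ext) (metis PowI eq_iff_diff_eq_0)
qed

lemma Phi_surj:
  assumes f: "f \<in> Rinv n"
  shows "f \<in> Phi n ` Tcar n"
proof -
  have fR: "f \<in> Rn n" and fi: "\<And>a. a \<in> {1..<n} \<Longrightarrow> act a f = f" using f by (auto simp: Rinv_def)
  obtain c where c: "\<forall>I. evR (c I) \<and> c I \<in> Rn n" "f = (\<Sum>I\<in>Pow {1..n}. mulR (c I) (S0set n I))"
    using decomp[OF fR] by blast
  have ci: "act a (c I) = c I" if "a \<in> {1..<n}" "I \<in> Pow {1..n}" for a I
    using decomp_inv[of c f n a] c fi that by auto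
  define c' where "c' I = (if I \<subseteq> {1..n} then c I else 0)" for I
  have "c' \<in> Tcar n"
    unfolding Tcar_def symP_def Rinv_def
    using c(1) ci by (auto simp: c'_def evR_def EV_def)
  moreover have "Phi n c' = f"
    unfolding Phi_def c(2) by (intro sum.cong refl) (simp add: c'_def)
  ultimately show ?thesis by blast
qed

lemma S0set_mult:
  assumes "I \<subseteq> {1..n}" "J \<subseteq> {1..n}"
  shows "mulR (S0set n I) (S0set n J) = (if I \<inter> J = {} then frag_cmul (sgnpair I J) (S0set n (I \<union> J)) else 0)"
proof -
  have f: "finite I" "finite J" using assms finite_subset by auto
  have u: "I \<union> J \<subseteq> {1..n}" using assms by auto
  show ?thesis unfolding S0set_YY[OF assms(1)] S0set_YY[OF assms(2)] S0set_YY[OF u]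
    by (rule YY_mult[OF odR_yS f])
qed

lemma prodterm:
  assumes c: "evR (c I)" and d: "evR (d J)" and I: "I \<subseteq> {1..n}" and J: "J \<subseteq> {1..n}"
  shows "mulR (mulR (c I) (S0set n I)) (mulR (d J) (S0set n J)) =
    (if I \<inter> J = {} then frag_cmul (sgnpair I J) (mulR (mulR (c I) (d J)) (S0set n (I \<union> J))) else 0)"
proof -
  have fs: "fsR (c I)" "fsR (d J)" "fsR (S0set n I)" "fsR (S0set n J)"
    using c d fsR_S0set[OF I] fsR_S0set[OF J] by (auto intro: fsR_evR)
  have "mulR (mulR (c I) (S0set n I)) (mulR (d J) (S0set n J)) = mulR (c I) (mulR (mulR (S0set n I) (d J)) (S0set n J))"
    using fs by (simp add: mulR_assoc' fsR_mulR)
  also have "mulR (S0set n I) (d J) = mulR (d J) (S0set n I)"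
    using even_comm[of "d J" "S0set n I"] d by (simp add: evR_def)
  also have "mulR (c I) (mulR (mulR (d J) (S0set n I)) (S0set n J)) = mulR (mulR (c I) (d J)) (mulR (S0set n I) (S0set n J))"
    using fs by (simp add: mulR_assoc' fsR_mulR)
  finally show ?thesis by (simp add: S0set_mult[OF I J] mulR_cmul_right)
qed

lemma single_unit_mul: "mulR (Poly_Mapping.single (0, {}) s) X = frag_cmul s X"
proof -
  have "Poly_Mapping.single (0, {}) s = frag_cmul s oneR" by (simp add: oneR_def frag_cmul_single)
  then show ?thesis by (simp add: mulR_cmul_left)
qed

lemma Phi_tmul:
  assumes c: "c \<in> Tcar n" and d: "d \<in> Tcar n"
  shows "Phi n (tmul n c d) = mulR (Phi n c) (Phi n d)"
proof -
  let ?Pw = "Pow {1..n}"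
  define G where "G x = (if fst x \<inter> snd x = {} then frag_cmul (sgnpair (fst x) (snd x)) (mulR (mulR (c (fst x)) (d (snd x))) (S0set n (fst x \<union> snd x))) else 0)" for x
  define Q where "Q K = {(I, J). I \<subseteq> {1..n} \<and> J \<subseteq> {1..n} \<and> I \<inter> J = {} \<and> I \<union> J = K}" for K
  have evc: "\<And>I. I \<in> ?Pw \<Longrightarrow> evR (c I)" using Tcar_props(1)[OF c] by auto
  have evd: "\<And>J. J \<in> ?Pw \<Longrightarrow> evR (d J)" using Tcar_props(1)[OF d] by auto
  have "mulR (Phi n c) (Phi n d) = (\<Sum>I\<in>?Pw. \<Sum>J\<in>?Pw. mulR (mulR (c I) (S0set n I)) (mulR (d J) (S0set n J)))"
    unfolding Phi_def mulR_sum_left[OF finPow] unfolding mulR_sum_right[OF finPow] ..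
  also have "\<dots> = (\<Sum>I\<in>?Pw. \<Sum>J\<in>?Pw. G (I, J))"
    by (intro sum.cong refl) (simp add: G_def prodterm evc evd)
  also have "\<dots> = (\<Sum>x\<in>?Pw \<times> ?Pw. G x)" by (simp add: sum.cartesian_product)
  finally have rhs: "mulR (Phi n c) (Phi n d) = (\<Sum>x\<in>?Pw \<times> ?Pw. G x)" .
  have QK: "Q K \<subseteq> ?Pw \<times> ?Pw" for K by (auto simp: Q_def)
  have finQ: "finite (Q K)" for K using QK[of K] finite_subset by (metis finPow finite_SigmaI)
  have tK: "mulR (tmul n c d K) (S0set n K) = (\<Sum>x\<in>Q K. G x)" for K
  proof -
    have "tmul n c d K = (\<Sum>x\<in>Q K. frag_cmul (sgnpair (fst x) (snd x)) (mulR (c (fst x)) (d (snd x))))"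
      unfolding tmul_def Q_def by (intro sum.cong refl) (auto simp: single_unit_mul)
    then have "mulR (tmul n c d K) (S0set n K) = (\<Sum>x\<in>Q K. frag_cmul (sgnpair (fst x) (snd x)) (mulR (mulR (c (fst x)) (d (snd x))) (S0set n K)))"
      by (simp add: mulR_sum_left[OF finQ] mulR_cmul_left)
    also have "\<dots> = (\<Sum>x\<in>Q K. G x)"
      by (intro sum.cong refl) (auto simp: G_def Q_def)
    finally show ?thesis .
  qed
  have grp: "(\<Sum>K\<in>?Pw. \<Sum>x\<in>{x. x \<in> ?Pw \<times> ?Pw \<and> fst x \<union> snd x = K}. G x) = (\<Sum>x\<in>?Pw \<times> ?Pw. G x)"
    by (rule sum.group) auto
  have "Phi n (tmul n c d) = (\<Sum>K\<in>?Pw. \<Sum>x\<in>Q K. G x)" unfolding Phi_def tK ..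
  also have "\<dots> = (\<Sum>K\<in>?Pw. \<Sum>x\<in>{x. x \<in> ?Pw \<times> ?Pw \<and> fst x \<union> snd x = K}. G x)"
  proof (rule sum.cong[OF refl])
    fix K assume "K \<in> ?Pw"
    show "(\<Sum>x\<in>Q K. G x) = (\<Sum>x\<in>{x. x \<in> ?Pw \<times> ?Pw \<and> fst x \<union> snd x = K}. G x)"
    proof (rule sum.mono_neutral_left)
      show "finite {x. x \<in> ?Pw \<times> ?Pw \<and> fst x \<union> snd x = K}"
        by (rule finite_subset[of _ "?Pw \<times> ?Pw"]) auto
      show "Q K \<subseteq> {x. x \<in> ?Pw \<times> ?Pw \<and> fst x \<union> snd x = K}" by (auto simp: Q_def)
      show "\<forall>x\<in>{x. x \<in> ?Pw \<times> ?Pw \<and> fst x \<union> snd x = K} - Q K. G x = 0"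
        by (auto simp: Q_def G_def)
    qed
  qed
  also have "\<dots> = (\<Sum>x\<in>?Pw \<times> ?Pw. G x)" by (rule grp)
  finally show ?thesis using rhs by simp
qed

lemma Phi_hom:
  assumes c: "c \<in> Tcar n" and h: "homT deg c"
  shows "homR deg (Phi n c)"
proof -
  obtain d1 d2 where deg: "deg = (d1, d2)" by (cases deg)
  show ?thesis
    unfolding Phi_def
  proof (rule homR_sum)
    fix I assume I: "I \<in> Pow {1..n}"
    show "homR deg (mulR (c I) (S0set n I))"
    proof (cases "c I = 0")
      case True then show ?thesis by simp
    next
      case False
      then obtain k0 where k0: "k0 \<in> Poly_Mapping.keys (c I)" by (metis all_not_in_conv keys_eq_empty)
      have ev: "evR (c I)" using Tcar_props(1)[OF c] I by auto
      have hk: "\<And>k. k \<in> Poly_Mapping.keys (c I) \<Longrightarrow> bideg (fst k, I) = (d1, d2)" using h deg by (auto simp: homT_def)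
      have d2: "d2 = 2 * int (card I)" using hk[OF k0] by (simp add: bideg_eq)
      have hc: "homR (d1 + 2 * int (\<Sum>I), 0) (c I)"
        unfolding homR_def
      proof
        fix k assume k: "k \<in> Poly_Mapping.keys (c I)"
        then have "snd k = {}" using ev by (auto simp: evR_def EV_def)
        then show "bideg k = (d1 + 2 * int (\<Sum>I), 0)" using hk[OF k] by (simp add: bideg_eq)
      qed
      have "homR (d1 + 2 * int (\<Sum>I) + - 2 * int (\<Sum>I), 0 + 2 * int (card I)) (mulR (c I) (S0set n I))"
        using I ev by (intro homR_mulR hc homR_S0set fsR_evR fsR_S0set) auto
      then show ?thesis using deg d2 by simp
    qed
  qed
qed

theorem corollary2p2:
  fixes n :: nat
  shows "bij_betw (Phi n) (Tcar n) (Rinv n)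
    \<and> Phi n tone = oneR
    \<and> (\<forall>c \<in> Tcar n. \<forall>d \<in> Tcar n. Phi n (\<lambda>I. c I + d I) = Phi n c + Phi n d)
    \<and> (\<forall>c \<in> Tcar n. \<forall>d \<in> Tcar n. Phi n (tmul n c d) = mulR (Phi n c) (Phi n d))
    \<and> (\<forall>c \<in> Tcar n. \<forall>deg. homT deg c \<longrightarrow> homR deg (Phi n c))"
proof (intro conjI ballI allI impI)
  show "bij_betw (Phi n) (Tcar n) (Rinv n)"
    unfolding bij_betw_def using Phi_inj Phi_Rinv Phi_surj by blast
  show "Phi n tone = oneR" by (rule Phi_tone)
  show "\<And>c d. Phi n (\<lambda>I. c I + d I) = Phi n c + Phi n d" by (rule Phi_add)
  show "\<And>c d. c \<in> Tcar n \<Longrightarrow> d \<in> Tcar n \<Longrightarrow> Phi n (tmul n c d) = mulR (Phi n c) (Phi n d)" by (rule Phi_tmul)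
  show "\<And>c deg. c \<in> Tcar n \<Longrightarrow> homT deg c \<Longrightarrow> homR deg (Phi n c)" by (rule Phi_hom)
qed

end
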